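(* There is an arithmetical comprehension term $\mathsf{disj}(X,Y)$ such that $\mathsf{ACA}_0$ proves, for all linear orders $\alpha,\beta$: (1) $\mathsf{disj}(\alpha,\beta)$ is a linear order; (2) $\mathsf{WO}(\mathsf{disj}(\alpha,\beta))\leftrightarrow\mathsf{WO}(\alpha)\vee\mathsf{WO}(\beta)$; (3) if there is an infinite descending chain $b_0\succ_\beta b_1\succ_\beta\cdots$ in $\beta$, then there is an embedding (order-preserving map) $f\colon\alpha\to\mathsf{disj}(\alpha,\beta)$.
   Context: Linear orders are pairs $\alpha=\langle D_\alpha,\prec_\alpha\rangle$ with $D_\alpha\subseteq\mathbb N$ and $\prec_\alpha$ a strict linear order on $D_\alpha$; $\mathsf{WO}(\alpha)$ says $\alpha$ is well-ordered. An arithmetical comprehension term is a term $\{x:\theta(x,X,Y)\}$ with $\theta$ arithmetical, whose existence is guaranteed by arithmetical comprehension. *)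

theory Defs
  imports Main
begin

text \<open>Semantic rendering of "ACA0 proves": truth in every (countable, hence w.l.o.g.
  with first-order domain the type nat) L2-structure satisfying the axioms of ACA0,
  in the sense of Simpson's SOSOA: first-order part with 0,1,+,*,<, second-order part
  a family of subsets of the first-order domain.\<close>

record L2struct =
  zr :: nat
  on :: nat
  pl :: "nat \<Rightarrow> nat \<Rightarrow> nat"
  tm :: "nat \<Rightarrow> nat \<Rightarrow> nat"
  ls :: "nat \<Rightarrow> nat \<Rightarrow> bool"
  sets :: "nat set set"

datatype trm = Var nat | Zero | One | Add trm trm | Mul trm trm

datatype afm = Less trm trm | Equ trm trm | In trm nat
  | Neg afm | Conj afm afm | ExN nat afm

fun ev :: "L2struct \<Rightarrow> (nat \<Rightarrow> nat) \<Rightarrow> trm \<Rightarrow> nat" where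
  "ev M e (Var v) = e v"
| "ev M e Zero = zr M"
| "ev M e One = on M"
| "ev M e (Add s t) = pl M (ev M e s) (ev M e t)"
| "ev M e (Mul s t) = tm M (ev M e s) (ev M e t)"

fun sat :: "L2struct \<Rightarrow> (nat \<Rightarrow> nat) \<Rightarrow> (nat \<Rightarrow> nat set) \<Rightarrow> afm \<Rightarrow> bool" where
  "sat M e E (Less s t) = ls M (ev M e s) (ev M e t)"
| "sat M e E (Equ s t) = (ev M e s = ev M e t)"
| "sat M e E (In t X) = (ev M e t \<in> E X)"
| "sat M e E (Neg p) = (\<not> sat M e E p)"
| "sat M e E (Conj p q) = (sat M e E p \<and> sat M e E q)"
| "sat M e E (ExN v p) = (\<exists>a. sat M (e(v := a)) E p)"

definition ACA0_model :: "L2struct \<Rightarrow> bool" where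
  "ACA0_model M \<longleftrightarrow>
     (\<forall>m. pl M m (on M) \<noteq> zr M) \<and>
     (\<forall>m n. pl M m (on M) = pl M n (on M) \<longrightarrow> m = n) \<and>
     (\<forall>m. pl M m (zr M) = m) \<and>
     (\<forall>m n. pl M m (pl M n (on M)) = pl M (pl M m n) (on M)) \<and>
     (\<forall>m. tm M m (zr M) = zr M) \<and>
     (\<forall>m n. tm M m (pl M n (on M)) = pl M (tm M m n) m) \<and>
     (\<forall>m. \<not> ls M m (zr M)) \<and>
     (\<forall>m n. ls M m (pl M n (on M)) \<longleftrightarrow> ls M m n \<or> m = n) \<and>
     \<comment> \<open>induction axiom\<close>
     (\<forall>X\<in>sets M. zr M \<in> X \<and> (\<forall>n. n \<in> X \<longrightarrow> pl M n (on M) \<in> X) \<longrightarrow> (\<forall>n. n \<in> X)) \<and>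
     \<comment> \<open>arithmetical comprehension scheme\<close>
     (\<forall>p e E v. (\<forall>i. E i \<in> sets M) \<longrightarrow> {a. sat M (e(v := a)) E p} \<in> sets M)"

definition pr :: "L2struct \<Rightarrow> nat \<Rightarrow> nat \<Rightarrow> nat" where
  "pr M i j = pl M (tm M (pl M i j) (pl M i j)) i"

definition LO :: "L2struct \<Rightarrow> nat set \<Rightarrow> nat set \<Rightarrow> bool" where
  "LO M D R \<longleftrightarrow>
     (\<forall>x y. pr M x y \<in> R \<longrightarrow> x \<in> D \<and> y \<in> D) \<and>
     (\<forall>x. pr M x x \<notin> R) \<and>
     (\<forall>x y z. pr M x y \<in> R \<and> pr M y z \<in> R \<longrightarrow> pr M x z \<in> R) \<and>
     (\<forall>x\<in>D. \<forall>y\<in>D. pr M x y \<in> R \<or> x = y \<or> pr M y x \<in> R)"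

definition desc_seq :: "L2struct \<Rightarrow> nat set \<Rightarrow> nat set \<Rightarrow> nat set \<Rightarrow> bool" where
  "desc_seq M D R F \<longleftrightarrow>
     (\<forall>i. \<exists>!y. pr M i y \<in> F) \<and>
     (\<forall>i y y'. pr M i y \<in> F \<and> pr M (pl M i (on M)) y' \<in> F
        \<longrightarrow> y \<in> D \<and> y' \<in> D \<and> pr M y' y \<in> R)"

definition WO :: "L2struct \<Rightarrow> nat set \<Rightarrow> nat set \<Rightarrow> bool" where
  "WO M D R \<longleftrightarrow> LO M D R \<and> \<not> (\<exists>F\<in>sets M. desc_seq M D R F)"

definition embedding :: "L2struct \<Rightarrow> nat set \<Rightarrow> nat set \<Rightarrow> nat set \<Rightarrow> nat set \<Rightarrow> nat set \<Rightarrow> bool" where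
  "embedding M F D1 R1 D2 R2 \<longleftrightarrow>
     (\<forall>x\<in>D1. \<exists>!y. pr M x y \<in> F) \<and>
     (\<forall>x y. pr M x y \<in> F \<longrightarrow> x \<in> D1 \<and> y \<in> D2) \<and>
     (\<forall>x x' y y'. pr M x y \<in> F \<and> pr M x' y' \<in> F \<and> pr M x x' \<in> R1 \<longrightarrow> pr M y y' \<in> R2)"

text \<open>Set environment: set variables 0,1 are D_alpha, R_alpha; 2,3 are D_beta, R_beta.\<close>
definition env4 :: "nat set \<Rightarrow> nat set \<Rightarrow> nat set \<Rightarrow> nat set \<Rightarrow> nat \<Rightarrow> nat set" where
  "env4 A B C D i = (if i = 1 then B else if i = 2 then C else if i = 3 then D else A)"

text \<open>The comprehension term {x : theta(x, X, Y)}, x being number variable 0.\<close>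
definition cterm :: "L2struct \<Rightarrow> afm \<Rightarrow> (nat \<Rightarrow> nat) \<Rightarrow> nat set \<Rightarrow> nat set \<Rightarrow> nat set \<Rightarrow> nat set \<Rightarrow> nat set" where
  "cterm M p e DA RA DB RB = {a. sat M (e(0 := a)) (env4 DA RA DB RB) p}"

end

theory Submission
  imports Defs
begin


definition Or :: "afm \<Rightarrow> afm \<Rightarrow> afm" where "Or p q = Neg (Conj (Neg p) (Neg q))"
definition Imp :: "afm \<Rightarrow> afm \<Rightarrow> afm" where "Imp p q = Neg (Conj p (Neg q))"
definition AllN :: "nat \<Rightarrow> afm \<Rightarrow> afm" where "AllN v p = Neg (ExN v (Neg p))"
definition Iff :: "afm \<Rightarrow> afm \<Rightarrow> afm" where "Iff p q = Conj (Imp p q) (Imp q p)"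
definition Leq :: "trm \<Rightarrow> trm \<Rightarrow> afm" where "Leq s t = Or (Less s t) (Equ s t)"
definition PRt :: "trm \<Rightarrow> trm \<Rightarrow> trm" where "PRt s t = Add (Mul (Add s t) (Add s t)) s"

lemma sat_derived[simp]:
  "sat M e E (Or p q) = (sat M e E p \<or> sat M e E q)"
  "sat M e E (Imp p q) = (sat M e E p \<longrightarrow> sat M e E q)"
  "sat M e E (AllN v p) = (\<forall>a. sat M (e(v:=a)) E p)"
  "sat M e E (Iff p q) = (sat M e E p \<longleftrightarrow> sat M e E q)"
  "sat M e E (Leq s t) = (ls M (ev M e s) (ev M e t) \<or> ev M e s = ev M e t)"
  by (auto simp: Or_def Imp_def AllN_def Iff_def Leq_def)

lemma ev_PRt[simp]: "ev M e (PRt s t) = pr M (ev M e s) (ev M e t)"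
  by (simp add: PRt_def pr_def)

fun tvars :: "trm \<Rightarrow> nat set" where
  "tvars (Var v) = {v}" | "tvars Zero = {}" | "tvars One = {}"
| "tvars (Add s t) = tvars s \<union> tvars t" | "tvars (Mul s t) = tvars s \<union> tvars t"

lemma tvars_PRt[simp]: "tvars (PRt s t) = tvars s \<union> tvars t"
  by (auto simp: PRt_def)

lemma ev_upd[simp]: "v \<notin> tvars t \<Longrightarrow> ev M (e(v:=a)) t = ev M e t"
  by (induction t) auto

locale aca =
  fixes M :: L2struct
  assumes aca: "ACA0_model M"
  and nonempty: "sets M \<noteq> {}"
begin

abbreviation Z where "Z \<equiv> zr M"
abbreviation O1 where "O1 \<equiv> on M"
abbreviation add (infixl "\<oplus>" 65) where "x \<oplus> y \<equiv> pl M x y"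
abbreviation mul (infixl "\<otimes>" 70) where "x \<otimes> y \<equiv> tm M x y"
abbreviation lt (infix "\<prec>" 50) where "x \<prec> y \<equiv> ls M x y"

lemma ax:
  "x \<oplus> O1 \<noteq> Z"
  "x \<oplus> O1 = y \<oplus> O1 \<longleftrightarrow> x = y"
  "x \<oplus> Z = x"
  "x \<oplus> (y \<oplus> O1) = (x \<oplus> y) \<oplus> O1"
  "x \<otimes> Z = Z"
  "x \<otimes> (y \<oplus> O1) = x \<otimes> y \<oplus> x"
  "\<not> x \<prec> Z"
  "x \<prec> y \<oplus> O1 \<longleftrightarrow> x \<prec> y \<or> x = y"
  using aca unfolding ACA0_model_def by auto

lemma compr: "(\<And>i. E i \<in> sets M) \<Longrightarrow> {a. sat M (e(v:=a)) E p} \<in> sets M"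
proof -
  have "\<forall>p e E v. (\<forall>i. E i \<in> sets M) \<longrightarrow> {a. sat M (e(v := a)) E p} \<in> sets M"
    using aca unfolding ACA0_model_def by (elim conjE) assumption
  then show "(\<And>i. E i \<in> sets M) \<Longrightarrow> {a. sat M (e(v:=a)) E p} \<in> sets M" by blast
qed

lemma defset:
  assumes "\<And>i. E i \<in> sets M" "\<And>a. sat M (e(v:=a)) E p \<longleftrightarrow> P a"
  shows "{a. P a} \<in> sets M"
  using compr[of E e v p, OF assms(1)] assms(2) by simp

lemma induct_set: "X \<in> sets M \<Longrightarrow> Z \<in> X \<Longrightarrow> (\<And>n. n \<in> X \<Longrightarrow> n \<oplus> O1 \<in> X) \<Longrightarrow> n \<in> X"
proof -
  have "\<forall>X\<in>sets M. Z \<in> X \<and> (\<forall>n. n \<in> X \<longrightarrow> n \<oplus> O1 \<in> X) \<longrightarrow> (\<forall>n. n \<in> X)"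
    using aca unfolding ACA0_model_def by (elim conjE) assumption
  then show "X \<in> sets M \<Longrightarrow> Z \<in> X \<Longrightarrow> (\<And>n. n \<in> X \<Longrightarrow> n \<oplus> O1 \<in> X) \<Longrightarrow> n \<in> X" by blast
qed

definition E0 :: "nat \<Rightarrow> nat set" where "E0 = (\<lambda>_. SOME S. S \<in> sets M)"
lemma E0[simp]: "E0 i \<in> sets M"
  unfolding E0_def using nonempty by (simp add: some_in_eq)

lemma indE:
  assumes "\<And>i. E i \<in> sets M" "\<And>a. sat M (e(v:=a)) E p \<longleftrightarrow> P a"
    "P Z" "\<And>n. P n \<Longrightarrow> P (n \<oplus> O1)"
  shows "\<forall>n. P n"
proof
  fix n
  have "{a. P a} \<in> sets M" by (rule defset[OF assms(1,2)])
  then show "P n" using induct_set[of "{a. P a}" n] assms(3,4) by auto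
qed

lemma ind:
  assumes "\<And>a. sat M (e(0:=a)) E0 p \<longleftrightarrow> P a"
    "P Z" "\<And>n. P n \<Longrightarrow> P (n \<oplus> O1)"
  shows "\<forall>n. P n"
  by (rule indE[OF E0 assms])

lemma add_0_left[simp]: "Z \<oplus> n = n"
proof -
  have "\<forall>n. Z \<oplus> n = n"
    by (rule ind[where p="Equ (Add Zero (Var 0)) (Var 0)" and e="\<lambda>_. 0"]) (simp_all add: ax)
  then show ?thesis by blast
qed

lemma add_suc_left: "(m \<oplus> O1) \<oplus> n = (m \<oplus> n) \<oplus> O1"
proof -
  have "\<forall>n. (m \<oplus> O1) \<oplus> n = (m \<oplus> n) \<oplus> O1"
    by (rule ind[where p="Equ (Add (Add (Var 1) One) (Var 0)) (Add (Add (Var 1) (Var 0)) One)" and e="\<lambda>_. m"]) (simp_all add: ax)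
  then show ?thesis by blast
qed

lemma add_comm: "m \<oplus> n = n \<oplus> m"
proof -
  have "\<forall>n. m \<oplus> n = n \<oplus> m"
    by (rule ind[where p="Equ (Add (Var 1) (Var 0)) (Add (Var 0) (Var 1))" and e="\<lambda>_. m"]) (simp_all add: ax add_suc_left)
  then show ?thesis by blast
qed

lemma add_assoc: "(m \<oplus> n) \<oplus> k = m \<oplus> (n \<oplus> k)"
proof -
  have "\<forall>k. (m \<oplus> n) \<oplus> k = m \<oplus> (n \<oplus> k)"
    by (rule ind[where p="Equ (Add (Add (Var 1) (Var 2)) (Var 0)) (Add (Var 1) (Add (Var 2) (Var 0)))" and e="\<lambda>i. if i = 1 then m else n"]) (simp_all add: ax)
  then show ?thesis by blast
qed

lemma add_left_comm: "m \<oplus> (n \<oplus> k) = n \<oplus> (m \<oplus> k)"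
  by (metis add_assoc add_comm)

lemmas add_ac = add_assoc add_comm add_left_comm

lemma add_0_right[simp]: "n \<oplus> Z = n" by (simp add: ax)

lemma zero_or_suc: "n = Z \<or> (\<exists>m. n = m \<oplus> O1)"
proof -
  have "\<forall>n. n = Z \<or> (\<exists>m. n = m \<oplus> O1)"
    by (rule ind[where p="Or (Equ (Var 0) Zero) (ExN 1 (Equ (Var 0) (Add (Var 1) One)))" and e="\<lambda>_. 0"]) auto
  then show ?thesis by blast
qed

lemma mult_0_left[simp]: "Z \<otimes> n = Z"
proof -
  have "\<forall>n. Z \<otimes> n = Z"
    by (rule ind[where p="Equ (Mul Zero (Var 0)) Zero" and e="\<lambda>_. 0"]) (simp_all add: ax)
  then show ?thesis by blast
qed

lemma mult_0_right[simp]: "n \<otimes> Z = Z" by (simp add: ax)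

lemma mult_suc_left: "(m \<oplus> O1) \<otimes> n = m \<otimes> n \<oplus> n"
proof -
  have "\<forall>n. (m \<oplus> O1) \<otimes> n = m \<otimes> n \<oplus> n"
    by (rule ind[where p="Equ (Mul (Add (Var 1) One) (Var 0)) (Add (Mul (Var 1) (Var 0)) (Var 0))" and e="\<lambda>_. m"]) (simp_all add: ax(3,5,6) add_ac)
  then show ?thesis by blast
qed

lemma mult_comm: "m \<otimes> n = n \<otimes> m"
proof -
  have "\<forall>n. m \<otimes> n = n \<otimes> m"
    by (rule ind[where p="Equ (Mul (Var 1) (Var 0)) (Mul (Var 0) (Var 1))" and e="\<lambda>_. m"]) (simp_all add: ax(3,5,6) mult_suc_left)
  then show ?thesis by blast
qed

lemma distrib_left: "m \<otimes> (n \<oplus> k) = m \<otimes> n \<oplus> m \<otimes> k"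
proof -
  have "\<forall>k. m \<otimes> (n \<oplus> k) = m \<otimes> n \<oplus> m \<otimes> k"
  proof (rule ind[where p="Equ (Mul (Var 1) (Add (Var 2) (Var 0))) (Add (Mul (Var 1) (Var 2)) (Mul (Var 1) (Var 0)))" and e="\<lambda>i. if i = 1 then m else n"])
    fix k assume IH: "m \<otimes> (n \<oplus> k) = m \<otimes> n \<oplus> m \<otimes> k"
    have "m \<otimes> (n \<oplus> (k \<oplus> O1)) = m \<otimes> ((n \<oplus> k) \<oplus> O1)" by (simp only: ax(4))
    also have "\<dots> = m \<otimes> (n \<oplus> k) \<oplus> m" by (simp only: ax(6))
    also have "\<dots> = m \<otimes> n \<oplus> (m \<otimes> k \<oplus> m)" by (simp only: IH add_assoc)
    also have "\<dots> = m \<otimes> n \<oplus> m \<otimes> (k \<oplus> O1)" by (simp only: ax(6))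
    finally show "m \<otimes> (n \<oplus> (k \<oplus> O1)) = m \<otimes> n \<oplus> m \<otimes> (k \<oplus> O1)" .
  qed simp_all
  then show ?thesis by blast
qed

lemma distrib_right: "(n \<oplus> k) \<otimes> m = n \<otimes> m \<oplus> k \<otimes> m"
  by (metis distrib_left mult_comm)

lemma mult_1_right[simp]: "m \<otimes> O1 = m"
  using ax(6)[of m Z] by simp

lemma mult_assoc: "(m \<otimes> n) \<otimes> k = m \<otimes> (n \<otimes> k)"
proof -
  have "\<forall>k. (m \<otimes> n) \<otimes> k = m \<otimes> (n \<otimes> k)"
    by (rule ind[where p="Equ (Mul (Mul (Var 1) (Var 2)) (Var 0)) (Mul (Var 1) (Mul (Var 2) (Var 0)))" and e="\<lambda>i. if i = 1 then m else n"]) (simp_all add: ax(5,6) distrib_left)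
  then show ?thesis by blast
qed

lemma mult_left_comm: "m \<otimes> (n \<otimes> k) = n \<otimes> (m \<otimes> k)"
  by (metis mult_assoc mult_comm)

lemmas mult_ac = mult_assoc mult_comm mult_left_comm

lemma one_eq: "O1 = Z \<oplus> O1" by simp

lemma mult_1_left[simp]: "O1 \<otimes> m = m"
  using mult_1_right mult_comm by metis

lemma add_cancel: "m \<oplus> k = n \<oplus> k \<longleftrightarrow> m = n"
proof -
  have "\<forall>k. m \<oplus> k = n \<oplus> k \<longrightarrow> m = n"
    by (rule ind[where p="Imp (Equ (Add (Var 1) (Var 0)) (Add (Var 2) (Var 0))) (Equ (Var 1) (Var 2))" and e="\<lambda>i. if i = 1 then m else n"]) (simp_all add: ax)
  then show ?thesis by blast
qed

lemma add_cancel_left: "k \<oplus> m = k \<oplus> n \<longleftrightarrow> m = n"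
  using add_cancel add_comm by metis

lemma add_eq_self: "m \<oplus> k = m \<longleftrightarrow> k = Z"
  using add_cancel_left[of m k Z] by simp

lemma add_eq_zero: "m \<oplus> n = Z \<longleftrightarrow> m = Z \<and> n = Z"
  using zero_or_suc[of n] ax(1) by (auto simp: ax)

lemma less_iff: "m \<prec> n \<longleftrightarrow> (\<exists>k. n = m \<oplus> k \<oplus> O1)"
proof -
  have 1: "\<forall>n. m \<prec> n \<longrightarrow> (\<exists>k. n = m \<oplus> k \<oplus> O1)"
  proof (rule ind[where p="Imp (Less (Var 1) (Var 0)) (ExN 2 (Equ (Var 0) (Add (Add (Var 1) (Var 2)) One)))" and e="\<lambda>_. m"])
    fix n assume IH: "m \<prec> n \<longrightarrow> (\<exists>k. n = m \<oplus> k \<oplus> O1)"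
    show "m \<prec> n \<oplus> O1 \<longrightarrow> (\<exists>k. n \<oplus> O1 = m \<oplus> k \<oplus> O1)"
    proof
      assume "m \<prec> n \<oplus> O1"
      then have "m \<prec> n \<or> m = n" by (simp add: ax)
      then show "\<exists>k. n \<oplus> O1 = m \<oplus> k \<oplus> O1"
      proof
        assume "m \<prec> n" then obtain k where "n = m \<oplus> k \<oplus> O1" using IH by blast
        then have "n \<oplus> O1 = m \<oplus> (k \<oplus> O1) \<oplus> O1" by (simp add: ax)
        then show ?thesis by blast
      next
        assume "m = n" then show ?thesis by (intro exI[of _ Z]) simp
      qed
    qed
  qed (simp_all add: ax)
  have 2: "\<forall>k. m \<prec> m \<oplus> k \<oplus> O1"
    by (rule ind[where p="Less (Var 1) (Add (Add (Var 1) (Var 0)) One)" and e="\<lambda>_. m"]) (simp_all add: ax)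
  show ?thesis using 1 2 by blast
qed

lemma less_irrefl[simp]: "\<not> m \<prec> m"
proof
  assume "m \<prec> m"
  then obtain k where "m = m \<oplus> k \<oplus> O1" using less_iff by blast
  then have "m \<oplus> (k \<oplus> O1) = m" by (simp add: add_ac)
  then show False using add_eq_self ax(1) by blast
qed

lemma less_trans: "a \<prec> b \<Longrightarrow> b \<prec> c \<Longrightarrow> a \<prec> c"
proof -
  assume "a \<prec> b" "b \<prec> c"
  then obtain k l where "b = a \<oplus> k \<oplus> O1" "c = b \<oplus> l \<oplus> O1" using less_iff by blast
  then have "c = a \<oplus> (k \<oplus> O1 \<oplus> l) \<oplus> O1" by (simp add: add_ac)
  then show "a \<prec> c" using less_iff by blast
qed

lemma less_suc_self: "m \<prec> m \<oplus> O1" by (simp add: ax)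

lemma zero_less_suc: "Z \<prec> m \<oplus> O1"
  using less_iff[of Z "m \<oplus> O1"] by auto

lemma zero_le: "Z \<prec> n \<or> Z = n"
  using zero_or_suc[of n] zero_less_suc by auto

lemma trich: "m \<prec> n \<or> m = n \<or> n \<prec> m"
proof -
  have "\<forall>n. m \<prec> n \<or> m = n \<or> n \<prec> m"
  proof (rule ind[where p="Or (Less (Var 1) (Var 0)) (Or (Equ (Var 1) (Var 0)) (Less (Var 0) (Var 1)))" and e="\<lambda>_. m"])
    show "m \<prec> Z \<or> m = Z \<or> Z \<prec> m" using zero_le[of m] by auto
  next
    fix n assume IH: "m \<prec> n \<or> m = n \<or> n \<prec> m"
    show "m \<prec> n \<oplus> O1 \<or> m = n \<oplus> O1 \<or> n \<oplus> O1 \<prec> m"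
    proof (cases "n \<prec> m")
      case True
      then obtain k where k: "m = n \<oplus> k \<oplus> O1" using less_iff by blast
      show ?thesis
      proof (cases "k = Z")
        case True then show ?thesis using k by simp
      next
        case False
        then obtain j where "k = j \<oplus> O1" using zero_or_suc by blast
        then have "m = (n \<oplus> O1) \<oplus> j \<oplus> O1" using k by (simp add: add_ac)
        then show ?thesis using less_iff by blast
      qed
    next
      case False then show ?thesis using IH by (simp add: ax)
    qed
  qed simp
  then show ?thesis by blast
qed

lemma less_asym: "a \<prec> b \<Longrightarrow> \<not> b \<prec> a"
  using less_trans less_irrefl by blast

lemma not_less: "\<not> a \<prec> b \<longleftrightarrow> b \<prec> a \<or> b = a"
  using trich less_asym by blast

lemma lo: "class.linorder (\<lambda>x y. x \<prec> y \<or> x = y) (\<prec>)"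
  by unfold_locales (use trich less_trans less_asym in blast)+

end

sublocale aca \<subseteq> L: linorder "\<lambda>x y. ls M x y \<or> x = y" "ls M"
  by (rule lo)


context aca begin

abbreviation le (infix "\<preceq>" 50) where "x \<preceq> y \<equiv> x \<prec> y \<or> x = y"

lemma add_eq_zero_simp[simp]: "m \<oplus> n = Z \<longleftrightarrow> m = Z \<and> n = Z" "Z = m \<oplus> n \<longleftrightarrow> m = Z \<and> n = Z"
  by (metis add_eq_zero)+

lemma one_ne_zero[simp]: "O1 \<noteq> Z" "Z \<noteq> O1" using ax(1)[of Z] by auto

lemma le_iff: "m \<preceq> n \<longleftrightarrow> (\<exists>k. n = m \<oplus> k)"
proof
  assume "m \<preceq> n" then show "\<exists>k. n = m \<oplus> k"
  proof
    assume "m \<prec> n" then obtain k where "n = m \<oplus> k \<oplus> O1" using less_iff by blast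
    then have "n = m \<oplus> (k \<oplus> O1)" by (simp add: add_assoc)
    then show ?thesis by blast
  next
    assume "m = n" then show ?thesis by (intro exI[of _ Z]) simp
  qed
next
  assume "\<exists>k. n = m \<oplus> k"
  then obtain k where k: "n = m \<oplus> k" by blast
  show "m \<preceq> n"
  proof (cases "k = Z")
    case False then obtain j where "k = j \<oplus> O1" using zero_or_suc by blast
    then have "n = m \<oplus> j \<oplus> O1" using k by (simp add: add_assoc)
    then show ?thesis using less_iff by blast
  qed (use k in simp)
qed

lemma add_less_mono: "a \<prec> b \<Longrightarrow> a \<oplus> c \<prec> b \<oplus> c"
proof -
  assume "a \<prec> b" then obtain k where "b = a \<oplus> k \<oplus> O1" using less_iff by blast
  then have "b \<oplus> c = (a \<oplus> c) \<oplus> k \<oplus> O1" by (simp add: add_ac)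
  then show ?thesis using less_iff by blast
qed

lemma add_less_iff: "a \<oplus> c \<prec> b \<oplus> c \<longleftrightarrow> a \<prec> b"
proof
  assume h: "a \<oplus> c \<prec> b \<oplus> c"
  show "a \<prec> b"
  proof (rule ccontr)
    assume "\<not> a \<prec> b" then have "b \<prec> a \<or> b = a" using not_less by blast
    then have "b \<oplus> c \<prec> a \<oplus> c \<or> b \<oplus> c = a \<oplus> c" using add_less_mono by blast
    then show False using h less_asym by auto
  qed
qed (rule add_less_mono)

lemma add_less_iff_left: "c \<oplus> a \<prec> c \<oplus> b \<longleftrightarrow> a \<prec> b"
  using add_less_iff[of a c b] by (simp add: add_comm)

lemma le_add: "a \<preceq> a \<oplus> b"
  using le_iff by blast

lemma le_add2: "a \<preceq> b \<oplus> a"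
  using le_iff[of a "b \<oplus> a"] add_comm[of b a] by blast

lemma less_suc_iff: "a \<prec> b \<oplus> O1 \<longleftrightarrow> a \<preceq> b" by (simp add: ax)

lemma suc_le_iff: "a \<oplus> O1 \<preceq> b \<longleftrightarrow> a \<prec> b"
proof
  assume "a \<oplus> O1 \<preceq> b" then obtain k where "b = a \<oplus> O1 \<oplus> k" using le_iff by blast
  then have "b = a \<oplus> k \<oplus> O1" by (simp add: add_ac)
  then show "a \<prec> b" using less_iff by blast
next
  assume "a \<prec> b" then obtain k where "b = a \<oplus> k \<oplus> O1" using less_iff by blast
  then have "b = a \<oplus> O1 \<oplus> k" by (simp add: add_ac)
  then show "a \<oplus> O1 \<preceq> b" using le_iff by blast
qed

lemma zero_less_iff: "Z \<prec> a \<longleftrightarrow> a \<noteq> Z"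
  using zero_le[of a] by auto

lemma le_zero_iff: "a \<preceq> Z \<longleftrightarrow> a = Z"
  using ax(7) by auto

lemma mult_eq_zero: "a \<otimes> b = Z \<longleftrightarrow> a = Z \<or> b = Z"
proof
  assume h: "a \<otimes> b = Z"
  show "a = Z \<or> b = Z"
  proof (rule ccontr)
    assume "\<not> (a = Z \<or> b = Z)"
    then obtain a' b' where ab: "a = a' \<oplus> O1" "b = b' \<oplus> O1" using zero_or_suc by blast
    have "a \<otimes> b = a \<otimes> b' \<oplus> a" unfolding ab(2) by (rule ax(6))
    then have "a \<otimes> b = (a \<otimes> b' \<oplus> a') \<oplus> O1" using ab(1) by (simp add: add_assoc)
    then show False using h ax(1) by metis
  qed
qed auto

lemma mult_less_mono: "a \<prec> b \<Longrightarrow> Z \<prec> c \<Longrightarrow> a \<otimes> c \<prec> b \<otimes> c"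
proof -
  assume "a \<prec> b" "Z \<prec> c"
  then obtain j c' where j: "b = a \<oplus> j \<oplus> O1" and c: "c = c' \<oplus> O1"
    using less_iff zero_less_iff zero_or_suc by blast
  have "b \<otimes> c = a \<otimes> c \<oplus> (j \<otimes> c \<oplus> c') \<oplus> O1"
    using j c by (simp add: distrib_right mult_suc_left ax(6) add_ac)
  then show ?thesis using less_iff by blast
qed

lemma mult_less_mono_left: "a \<prec> b \<Longrightarrow> Z \<prec> c \<Longrightarrow> c \<otimes> a \<prec> c \<otimes> b"
  using mult_less_mono mult_comm by metis

lemma mult_le_mono: "a \<preceq> b \<Longrightarrow> a \<otimes> c \<preceq> b \<otimes> c"
  using mult_less_mono[of a b c] zero_le[of c] by auto

lemma mult_le_mono_left: "a \<preceq> b \<Longrightarrow> c \<otimes> a \<preceq> c \<otimes> b"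
  using mult_le_mono mult_comm by metis

lemma mult_cancel: "Z \<prec> c \<Longrightarrow> a \<otimes> c = b \<otimes> c \<Longrightarrow> a = b"
  using trich[of a b] mult_less_mono by (metis less_irrefl)

lemma le_mult_self: "Z \<prec> c \<Longrightarrow> a \<preceq> a \<otimes> c"
proof -
  assume "Z \<prec> c"
  then have "O1 \<preceq> c" using suc_le_iff[of Z c] by simp
  then show ?thesis using mult_le_mono_left[of O1 c a] by simp
qed

lemma zero_less_one[simp]: "Z \<prec> O1" using zero_less_suc[of Z] by simp

lemma pr_eq: "pr M i j = (i \<oplus> j) \<otimes> (i \<oplus> j) \<oplus> i" by (simp add: pr_def)

lemma sq_gap: "i \<preceq> s \<Longrightarrow> s \<prec> s' \<Longrightarrow> s \<otimes> s \<oplus> i \<prec> s' \<otimes> s'"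
proof -
  assume i: "i \<preceq> s" and s: "s \<prec> s'"
  have 1: "s \<oplus> O1 \<preceq> s'" using s suc_le_iff by blast
  have a: "(s \<oplus> O1) \<otimes> (s \<oplus> O1) \<preceq> s' \<otimes> (s \<oplus> O1)" using mult_le_mono[OF 1] .
  have b: "s' \<otimes> (s \<oplus> O1) \<preceq> s' \<otimes> s'" using mult_le_mono_left[OF 1] .
  have 2: "(s \<oplus> O1) \<otimes> (s \<oplus> O1) \<preceq> s' \<otimes> s'" using a b L.order_trans by blast
  have 3: "(s \<oplus> O1) \<otimes> (s \<oplus> O1) = s \<otimes> s \<oplus> (s \<oplus> s \<oplus> O1)"
    by (simp add: ax(6) mult_suc_left add_ac)
  have "i \<preceq> s \<oplus> s" using i le_add[of s s] L.order_trans by blast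
  then have "i \<prec> s \<oplus> s \<oplus> O1" using less_suc_iff by blast
  then have "s \<otimes> s \<oplus> i \<prec> s \<otimes> s \<oplus> (s \<oplus> s \<oplus> O1)" using add_less_iff_left by blast
  then have "s \<otimes> s \<oplus> i \<prec> (s \<oplus> O1) \<otimes> (s \<oplus> O1)" using 3 by simp
  then show ?thesis using 2 L.less_le_trans by blast
qed

lemma pr_inj: "pr M i j = pr M i' j' \<Longrightarrow> i = i' \<and> j = j'"
proof -
  assume h: "pr M i j = pr M i' j'"
  have key: "s \<otimes> s \<oplus> i \<noteq> s' \<otimes> s' \<oplus> i'" if "i \<preceq> s" "s \<prec> s'" for s s' i i'
  proof -
    have "s \<otimes> s \<oplus> i \<prec> s' \<otimes> s'" using sq_gap that by blast
    moreover have "s' \<otimes> s' \<preceq> s' \<otimes> s' \<oplus> i'" by (rule le_add)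
    ultimately have "s \<otimes> s \<oplus> i \<prec> s' \<otimes> s' \<oplus> i'" using L.less_le_trans by blast
    then show ?thesis by auto
  qed
  have h2: "(i \<oplus> j) \<otimes> (i \<oplus> j) \<oplus> i = (i' \<oplus> j') \<otimes> (i' \<oplus> j') \<oplus> i'" using h by (simp only: pr_eq)
  have "\<not> (i \<oplus> j) \<prec> (i' \<oplus> j')" using key[of i "i \<oplus> j" "i' \<oplus> j'" i'] h2 le_add by blast
  moreover have "\<not> (i' \<oplus> j') \<prec> (i \<oplus> j)" using key[of i' "i' \<oplus> j'" "i \<oplus> j" i] h2 le_add by metis
  ultimately have s: "i \<oplus> j = i' \<oplus> j'" using trich by blast
  then have "i = i'" using h2 add_cancel_left by metis
  then show ?thesis using s add_cancel_left by metis
qed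

lemma pr_inj_iff[simp]: "pr M i j = pr M i' j' \<longleftrightarrow> i = i' \<and> j = j'"
  using pr_inj by blast

lemma pr_mono1: "i \<prec> i' \<Longrightarrow> pr M i j \<prec> pr M i' j"
proof -
  assume h: "i \<prec> i'"
  then have s: "i \<oplus> j \<preceq> i' \<oplus> j" using add_less_mono by blast
  have a: "(i \<oplus> j) \<otimes> (i \<oplus> j) \<preceq> (i' \<oplus> j) \<otimes> (i \<oplus> j)" by (rule mult_le_mono[OF s])
  have b: "(i' \<oplus> j) \<otimes> (i \<oplus> j) \<preceq> (i' \<oplus> j) \<otimes> (i' \<oplus> j)" by (rule mult_le_mono_left[OF s])
  have c: "(i \<oplus> j) \<otimes> (i \<oplus> j) \<preceq> (i' \<oplus> j) \<otimes> (i' \<oplus> j)" using L.order_trans[OF a b] .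
  have d: "(i \<oplus> j) \<otimes> (i \<oplus> j) \<oplus> i \<prec> (i \<oplus> j) \<otimes> (i \<oplus> j) \<oplus> i'" using h add_less_iff_left by blast
  have e: "(i \<oplus> j) \<otimes> (i \<oplus> j) \<oplus> i' \<preceq> (i' \<oplus> j) \<otimes> (i' \<oplus> j) \<oplus> i'"
    using c add_less_mono[of "(i \<oplus> j) \<otimes> (i \<oplus> j)" "(i' \<oplus> j) \<otimes> (i' \<oplus> j)" i'] by auto
  have "(i \<oplus> j) \<otimes> (i \<oplus> j) \<oplus> i \<prec> (i' \<oplus> j) \<otimes> (i' \<oplus> j) \<oplus> i'" using L.less_le_trans[OF d e] .
  then show ?thesis by (simp only: pr_eq)
qed

lemma lnp_set:
  assumes S: "S \<in> sets M" and x: "x \<in> S"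
  shows "\<exists>m\<in>S. \<forall>y\<in>S. m \<preceq> y"
proof (rule ccontr)
  assume no: "\<not> (\<exists>m\<in>S. \<forall>y\<in>S. m \<preceq> y)"
  have "\<forall>n. \<forall>m. m \<preceq> n \<longrightarrow> m \<notin> S"
  proof (rule indE[where E="\<lambda>_. S" and e="\<lambda>_. 0" and v=0 and p="AllN 1 (Imp (Leq (Var 1) (Var 0)) (Neg (In (Var 1) 0)))"])
    show "\<forall>m. m \<preceq> Z \<longrightarrow> m \<notin> S"
    proof (intro allI impI)
      fix m assume "m \<preceq> Z"
      then have "m = Z" using le_zero_iff by blast
      then show "m \<notin> S" using no zero_le by blast
    qed
  next
    fix n assume IH: "\<forall>m. m \<preceq> n \<longrightarrow> m \<notin> S"
    show "\<forall>m. m \<preceq> n \<oplus> O1 \<longrightarrow> m \<notin> S"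
    proof (intro allI impI)
      fix m assume m: "m \<preceq> n \<oplus> O1"
      show "m \<notin> S"
      proof
        assume mS: "m \<in> S"
        then have "m = n \<oplus> O1" using m IH less_suc_iff by blast
        moreover have "\<forall>y\<in>S. m \<preceq> y"
        proof
          fix y assume "y \<in> S"
          then have "\<not> y \<preceq> n" using IH by blast
          then show "m \<preceq> y" using \<open>m = n \<oplus> O1\<close> not_less less_suc_iff by (metis suc_le_iff)
        qed
        ultimately show False using no mS by blast
      qed
    qed
  qed (use S in simp_all)
  then show False using x by blast
qed

lemma lnp:
  assumes "\<And>i. E i \<in> sets M" "\<And>a. sat M (e(v:=a)) E p \<longleftrightarrow> P a" "P x"
  shows "\<exists>m. P m \<and> (\<forall>y. P y \<longrightarrow> m \<preceq> y)"
  using lnp_set[OF defset[OF assms(1,2)], of x] assms(3) by auto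

definition dvdM :: "nat \<Rightarrow> nat \<Rightarrow> bool" where "dvdM a b \<longleftrightarrow> (\<exists>k. b = a \<otimes> k)"

lemma dvd_refl[simp]: "dvdM a a" unfolding dvdM_def by (metis mult_1_right)
lemma dvd_zero[simp]: "dvdM a Z" unfolding dvdM_def by (metis mult_0_right)
lemma one_dvd[simp]: "dvdM O1 a" unfolding dvdM_def by (metis mult_1_left)
lemma dvd_mult: "dvdM a b \<Longrightarrow> dvdM a (b \<otimes> c)" unfolding dvdM_def by (metis mult_assoc)
lemma dvd_mult2: "dvdM a b \<Longrightarrow> dvdM a (c \<otimes> b)" using dvd_mult mult_comm by metis
lemma dvd_trans: "dvdM a b \<Longrightarrow> dvdM b c \<Longrightarrow> dvdM a c" unfolding dvdM_def by (metis mult_assoc)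
lemma dvd_add: "dvdM a b \<Longrightarrow> dvdM a c \<Longrightarrow> dvdM a (b \<oplus> c)" unfolding dvdM_def by (metis distrib_left)

lemma dvd_add_cancel: "dvdM m (x \<oplus> y) \<Longrightarrow> dvdM m x \<Longrightarrow> dvdM m y"
proof -
  assume "dvdM m (x \<oplus> y)" "dvdM m x"
  then obtain u w where u: "x = m \<otimes> u" and w: "x \<oplus> y = m \<otimes> w" unfolding dvdM_def by blast
  show "dvdM m y"
  proof (cases "m = Z")
    case True then show ?thesis using u w by (simp add: add_eq_zero)
  next
    case False
    then have m: "Z \<prec> m" using zero_less_iff by blast
    have "u \<preceq> w"
    proof (rule ccontr)
      assume "\<not> u \<preceq> w"
      then have "w \<prec> u" using not_less by blast
      then have "m \<otimes> w \<prec> m \<otimes> u" using mult_less_mono_left m by blast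
      moreover have "m \<otimes> u \<preceq> m \<otimes> w" using u w le_add by metis
      ultimately show False using L.less_le_not_le by blast
    qed
    then obtain t where "w = u \<oplus> t" using le_iff by blast
    then have "m \<otimes> u \<oplus> y = m \<otimes> u \<oplus> m \<otimes> t" using u w by (simp add: distrib_left)
    then have "y = m \<otimes> t" using add_cancel_left by blast
    then show ?thesis unfolding dvdM_def by blast
  qed
qed

lemma dvd_one: "dvdM q O1 \<Longrightarrow> q = O1"
proof -
  assume "dvdM q O1"
  then obtain k where k: "O1 = q \<otimes> k" unfolding dvdM_def by blast
  then have "k \<noteq> Z" by (metis mult_0_right one_ne_zero)
  then have "O1 \<preceq> k" using zero_less_iff suc_le_iff[of Z k] by simp
  then have "q \<otimes> O1 \<preceq> q \<otimes> k" by (rule mult_le_mono_left)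
  then have "q \<preceq> O1" using k[symmetric] by simp
  moreover have "q \<noteq> Z" using k by (metis mult_0_left one_ne_zero)
  ultimately show "q = O1" using less_suc_iff[of q Z] le_zero_iff by (metis add_0_left)
qed

lemma not_dvd_one: "O1 \<prec> m \<Longrightarrow> \<not> dvdM m O1"
  using dvd_one by blast

lemma division: "Z \<prec> s \<Longrightarrow> \<exists>q r. x = s \<otimes> q \<oplus> r \<and> r \<prec> s"
proof -
  assume s: "Z \<prec> s"
  have "\<forall>x. \<exists>q r. x = s \<otimes> q \<oplus> r \<and> r \<prec> s"
  proof (rule ind[where e="\<lambda>_. s" and p="ExN 2 (ExN 3 (Conj (Equ (Var 0) (Add (Mul (Var 1) (Var 2)) (Var 3))) (Less (Var 3) (Var 1))))"])
    show "\<exists>q r. Z = s \<otimes> q \<oplus> r \<and> r \<prec> s" using s by (intro exI[of _ Z]) simp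
  next
    fix x assume "\<exists>q r. x = s \<otimes> q \<oplus> r \<and> r \<prec> s"
    then obtain q r where qr: "x = s \<otimes> q \<oplus> r" "r \<prec> s" by blast
    show "\<exists>q r. x \<oplus> O1 = s \<otimes> q \<oplus> r \<and> r \<prec> s"
    proof (cases "r \<oplus> O1 = s")
      case True
      have "x \<oplus> O1 = s \<otimes> q \<oplus> (r \<oplus> O1)" using qr by (simp add: add_assoc)
      also have "\<dots> = s \<otimes> (q \<oplus> O1)" using True by (simp add: ax(6))
      finally have "x \<oplus> O1 = s \<otimes> (q \<oplus> O1) \<oplus> Z" by simp
      then show ?thesis using s by blast
    next
      case False
      then have "r \<oplus> O1 \<prec> s" using qr(2) suc_le_iff by blast
      moreover have "x \<oplus> O1 = s \<otimes> q \<oplus> (r \<oplus> O1)" using qr by (simp add: add_ac)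
      ultimately show ?thesis by blast
    qed
  qed simp
  then show ?thesis by blast
qed

definition coprime :: "nat \<Rightarrow> nat \<Rightarrow> bool" where
  "coprime m a \<longleftrightarrow> (\<forall>q. dvdM q m \<and> dvdM q a \<longrightarrow> q = O1)"

lemma euclid:
  assumes m: "Z \<prec> m" and h: "dvdM m (a \<otimes> b)" and c: "coprime m a"
  shows "dvdM m b"
proof (cases "a = Z")
  case True
  then have "m = O1" using c unfolding coprime_def by simp
  then show ?thesis by simp
next
  case False
  let ?P = "\<lambda>x. Z \<prec> x \<and> dvdM m (x \<otimes> b)"
  have "\<exists>s. ?P s \<and> (\<forall>y. ?P y \<longrightarrow> s \<preceq> y)"
    by (rule lnp[where E=E0 and e="\<lambda>i. if i = 1 then m else b" and v=0 and
          p="Conj (Less Zero (Var 0)) (ExN 3 (Equ (Mul (Var 0) (Var 2)) (Mul (Var 1) (Var 3))))" and x=m])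
       (use m in \<open>auto simp: dvdM_def\<close>)
  then obtain s where s: "?P s" and smin: "\<And>y. ?P y \<Longrightarrow> s \<preceq> y" by blast
  have sd: "dvdM s x" if x: "?P x" for x
  proof -
    obtain q r where qr: "x = s \<otimes> q \<oplus> r" "r \<prec> s" using division s by blast
    have "x \<otimes> b = (s \<otimes> b) \<otimes> q \<oplus> r \<otimes> b" using qr by (simp add: distrib_right distrib_left mult_ac)
    then have "dvdM m ((s \<otimes> b) \<otimes> q \<oplus> r \<otimes> b)" using x by simp
    moreover have "dvdM m ((s \<otimes> b) \<otimes> q)" using s dvd_mult by blast
    ultimately have "dvdM m (r \<otimes> b)" using dvd_add_cancel by blast
    then have "r = Z" using smin[of r] qr(2) zero_less_iff L.less_le_not_le by blast
    then have "x = s \<otimes> q" using qr by simp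
    then show ?thesis unfolding dvdM_def by blast
  qed
  have "dvdM s m" using sd[of m] m dvd_mult[OF dvd_refl, of m b] by blast
  moreover have "dvdM s a" using sd[of a] False h zero_less_iff by blast
  ultimately have "s = O1" using c unfolding coprime_def by blast
  then show ?thesis using s by simp
qed

lemma lcm_exists: "\<exists>d. Z \<prec> d \<and> (\<forall>k. Z \<prec> k \<and> k \<preceq> N \<longrightarrow> dvdM k d)"
proof -
  have "\<forall>N. \<exists>d. Z \<prec> d \<and> (\<forall>k. Z \<prec> k \<and> k \<preceq> N \<longrightarrow> dvdM k d)"
  proof (rule ind[where e="\<lambda>_. 0" and p="ExN 1 (Conj (Less Zero (Var 1)) (AllN 2 (Imp (Conj (Less Zero (Var 2)) (Leq (Var 2) (Var 0))) (ExN 3 (Equ (Var 1) (Mul (Var 2) (Var 3)))))))"])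
    show "\<exists>d. Z \<prec> d \<and> (\<forall>k. Z \<prec> k \<and> k \<preceq> Z \<longrightarrow> dvdM k d)"
      using le_zero_iff by (intro exI[of _ O1]) auto
  next
    fix N assume "\<exists>d. Z \<prec> d \<and> (\<forall>k. Z \<prec> k \<and> k \<preceq> N \<longrightarrow> dvdM k d)"
    then obtain d where d: "Z \<prec> d" "\<And>k. Z \<prec> k \<and> k \<preceq> N \<Longrightarrow> dvdM k d" by blast
    have "Z \<prec> d \<otimes> (N \<oplus> O1)" using d(1) mult_less_mono[of Z d "N \<oplus> O1"] zero_less_suc by simp
    moreover have "dvdM k (d \<otimes> (N \<oplus> O1))" if "Z \<prec> k" "k \<preceq> N \<oplus> O1" for k
    proof (cases "k = N \<oplus> O1")
      case True then show ?thesis by (simp add: dvd_mult2)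
    next
      case False then have "k \<preceq> N" using that less_suc_iff by blast
      then show ?thesis using d(2) that dvd_mult by blast
    qed
    ultimately show "\<exists>d. Z \<prec> d \<and> (\<forall>k. Z \<prec> k \<and> k \<preceq> N \<oplus> O1 \<longrightarrow> dvdM k d)" by blast
  qed (auto simp: dvdM_def)
  then show ?thesis by blast
qed

definition md :: "nat \<Rightarrow> nat \<Rightarrow> nat" where "md d z = O1 \<oplus> (z \<oplus> O1) \<otimes> d"

lemma md_gt1: "Z \<prec> d \<Longrightarrow> O1 \<prec> md d z"
proof -
  assume "Z \<prec> d"
  then have "Z \<prec> (z \<oplus> O1) \<otimes> d" using mult_less_mono[of Z "z \<oplus> O1" d] zero_less_suc by simp
  then show ?thesis unfolding md_def using add_less_iff_left[of O1 Z] by simp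
qed

lemma coprime_sym: "coprime a b \<Longrightarrow> coprime b a" unfolding coprime_def by blast

lemma coprime_md:
  assumes d: "Z \<prec> d" "\<And>k. Z \<prec> k \<and> k \<preceq> N \<Longrightarrow> dvdM k d"
    and zz: "z \<prec> z'" "z' \<prec> N"
  shows "coprime (md d z) (md d z')"
  unfolding coprime_def
proof (intro allI impI)
  fix q assume q: "dvdM q (md d z) \<and> dvdM q (md d z')"
  obtain D where D: "z' = z \<oplus> D \<oplus> O1" using zz less_iff by blast
  have id: "(z' \<oplus> O1) \<otimes> md d z = (z \<oplus> O1) \<otimes> md d z' \<oplus> (D \<oplus> O1)"
    unfolding md_def D by (simp add: distrib_left distrib_right mult_suc_left ax(6) add_ac mult_ac)
  have "dvdM q ((z \<oplus> O1) \<otimes> md d z' \<oplus> (D \<oplus> O1))" using q id dvd_mult2 by metis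
  then have qD: "dvdM q (D \<oplus> O1)" using q dvd_add_cancel dvd_mult2 by blast
  have "D \<oplus> O1 \<preceq> z'" using D le_add2[of "D \<oplus> O1" z] by (simp add: add_ac)
  then have "D \<oplus> O1 \<preceq> N" using zz(2) L.le_less_trans by blast
  then have "dvdM (D \<oplus> O1) d" using d(2) zero_less_suc by blast
  then have "dvdM q ((z \<oplus> O1) \<otimes> d)" using qD dvd_trans dvd_mult2 by blast
  moreover have "dvdM q (O1 \<oplus> (z \<oplus> O1) \<otimes> d)" using q unfolding md_def by blast
  ultimately have "dvdM q O1" using dvd_add_cancel[of q "(z \<oplus> O1) \<otimes> d" O1] by (simp add: add_comm)
  then show "q = O1" by (rule dvd_one)
qed

end


definition MDt :: "trm \<Rightarrow> trm \<Rightarrow> trm" where "MDt d z = Add One (Mul (Add z One) d)"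
definition CODEt :: "trm \<Rightarrow> trm \<Rightarrow> trm \<Rightarrow> trm \<Rightarrow> trm" where
  "CODEt n N d s = PRt n (PRt N (PRt d s))"

definition below :: "nat \<Rightarrow> trm \<Rightarrow> bool" where "below b t \<longleftrightarrow> (\<forall>w\<in>tvars t. w < b)"

lemma tvars_MDt[simp]: "tvars (MDt d z) = tvars d \<union> tvars z" by (auto simp: MDt_def)
lemma tvars_CODEt[simp]: "tvars (CODEt n N d s) = tvars n \<union> tvars N \<union> tvars d \<union> tvars s" by (auto simp: CODEt_def)

lemma below_simps[simp]:
  "below b (Var v) \<longleftrightarrow> v < b" "below b Zero" "below b One"
  "below b (Add s t) \<longleftrightarrow> below b s \<and> below b t" "below b (Mul s t) \<longleftrightarrow> below b s \<and> below b t"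
  "below b (PRt s t) \<longleftrightarrow> below b s \<and> below b t"
  by (auto simp: below_def)

lemma below_notin: "below b t \<Longrightarrow> b \<le> v \<Longrightarrow> v \<notin> tvars t"
  by (auto simp: below_def)

lemma ev_upd_below: "below b t \<Longrightarrow> b \<le> v \<Longrightarrow> ev M (e(v:=a)) t = ev M e t"
  by (rule ev_upd) (auto simp: below_def)

lemma below_mono: "below b t \<Longrightarrow> b \<le> b' \<Longrightarrow> below b' t"
  by (auto simp: below_def)

definition decF :: "nat \<Rightarrow> trm \<Rightarrow> trm \<Rightarrow> trm \<Rightarrow> afm" where
  "decF b tc ti ty = ExN (b+1) (ExN (b+2) (ExN (b+3) (ExN (b+4)
     (Conj (Equ tc (CODEt (Var (b+1)) (Var (b+2)) (Var (b+3)) (Var (b+4))))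
     (Conj (Less ti (Var (b+1))) (Conj (Less (PRt ti ty) (Var (b+2)))
       (ExN (b+5) (Equ (Var (b+4)) (Mul (MDt (Var (b+3)) (PRt ti ty)) (Var (b+5)))))))))))"

definition lenF :: "nat \<Rightarrow> trm \<Rightarrow> trm \<Rightarrow> afm" where
  "lenF b tc tn = ExN (b+1) (ExN (b+2) (ExN (b+3)
     (Equ tc (CODEt tn (Var (b+1)) (Var (b+2)) (Var (b+3))))))"

context aca begin

lemma ev_MDt[simp]: "ev M e (MDt d z) = O1 \<oplus> (ev M e z \<oplus> O1) \<otimes> ev M e d" by (simp add: MDt_def)

lemma md_ev: "ev M e (MDt d z) = md (ev M e d) (ev M e z)" by (simp add: md_def)

definition code :: "nat \<Rightarrow> nat \<Rightarrow> nat \<Rightarrow> nat \<Rightarrow> nat" where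
  "code n N d s = pr M n (pr M N (pr M d s))"

lemma ev_CODEt[simp]: "ev M e (CODEt n N d s) = code (ev M e n) (ev M e N) (ev M e d) (ev M e s)"
  by (simp add: CODEt_def code_def)

lemma code_inj[simp]: "code n N d s = code n' N' d' s' \<longleftrightarrow> n = n' \<and> N = N' \<and> d = d' \<and> s = s'"
  by (simp add: code_def)

definition dec :: "nat \<Rightarrow> nat \<Rightarrow> nat \<Rightarrow> bool" where
  "dec c i y \<longleftrightarrow> (\<exists>n N d s. c = code n N d s \<and> i \<prec> n \<and> pr M i y \<prec> N \<and> dvdM (md d (pr M i y)) s)"

definition len :: "nat \<Rightarrow> nat \<Rightarrow> bool" where
  "len c n \<longleftrightarrow> (\<exists>N d s. c = code n N d s)"

lemma sat_decF[simp]: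
  assumes "below b tc" "below b ti" "below b ty"
  shows "sat M e E (decF b tc ti ty) \<longleftrightarrow> dec (ev M e tc) (ev M e ti) (ev M e ty)"
proof -
  have [simp]: "\<And>v. b \<le> v \<Longrightarrow> v \<notin> tvars tc" "\<And>v. b \<le> v \<Longrightarrow> v \<notin> tvars ti" "\<And>v. b \<le> v \<Longrightarrow> v \<notin> tvars ty"
    using assms below_notin by blast+
  show ?thesis by (simp add: decF_def dec_def dvdM_def md_def)
qed

lemma sat_lenF[simp]:
  assumes "below b tc" "below b tn"
  shows "sat M e E (lenF b tc tn) \<longleftrightarrow> len (ev M e tc) (ev M e tn)"
proof -
  have [simp]: "\<And>v. b \<le> v \<Longrightarrow> v \<notin> tvars tc" "\<And>v. b \<le> v \<Longrightarrow> v \<notin> tvars tn"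
    using assms below_notin by blast+
  show ?thesis by (simp add: lenF_def len_def)
qed

lemma dec_code: "dec (code n N d s) i y \<longleftrightarrow> i \<prec> n \<and> pr M i y \<prec> N \<and> dvdM (md d (pr M i y)) s"
  by (simp add: dec_def)

lemma len_unique: "len c n \<Longrightarrow> len c n' \<Longrightarrow> n = n'"
  by (auto simp: len_def)

lemma dec_len: "dec c i y \<Longrightarrow> \<exists>n. len c n \<and> i \<prec> n"
  by (auto simp: dec_def len_def)

lemma dec_len2: "dec c i y \<Longrightarrow> len c n \<Longrightarrow> i \<prec> n"
  using dec_len len_unique by blast

lemma setcode:
  assumes d: "Z \<prec> d" "\<And>k. Z \<prec> k \<and> k \<preceq> N \<Longrightarrow> dvdM k d" and Y: "Y \<in> sets M"
  shows "\<exists>s. \<forall>z. z \<prec> N \<longrightarrow> (dvdM (md d z) s \<longleftrightarrow> z \<in> Y)"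
proof -
  have "\<forall>n. \<exists>s. \<forall>z. z \<prec> N \<longrightarrow> (dvdM (md d z) s \<longleftrightarrow> z \<in> Y \<and> z \<prec> n)"
  proof (rule indE[where E="\<lambda>_. Y" and e="\<lambda>i. if i = 1 then N else d" and v=0 and
        p="ExN 5 (AllN 6 (Imp (Less (Var 6) (Var 1)) (Iff (ExN 7 (Equ (Var 5) (Mul (MDt (Var 2) (Var 6)) (Var 7)))) (Conj (In (Var 6) 0) (Less (Var 6) (Var 0))))))"])
    show "\<exists>s. \<forall>z. z \<prec> N \<longrightarrow> (dvdM (md d z) s \<longleftrightarrow> z \<in> Y \<and> z \<prec> Z)"
      using not_dvd_one md_gt1[OF d(1)] ax(7) by (intro exI[of _ O1]) blast
  next
    fix n assume "\<exists>s. \<forall>z. z \<prec> N \<longrightarrow> (dvdM (md d z) s \<longleftrightarrow> z \<in> Y \<and> z \<prec> n)"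
    then obtain s where s: "\<And>z. z \<prec> N \<Longrightarrow> (dvdM (md d z) s \<longleftrightarrow> z \<in> Y \<and> z \<prec> n)" by blast
    show "\<exists>s. \<forall>z. z \<prec> N \<longrightarrow> (dvdM (md d z) s \<longleftrightarrow> z \<in> Y \<and> z \<prec> n \<oplus> O1)"
    proof (cases "n \<in> Y \<and> n \<prec> N")
      case True
      have "dvdM (md d z) (s \<otimes> md d n) \<longleftrightarrow> z \<in> Y \<and> z \<prec> n \<oplus> O1" if z: "z \<prec> N" for z
      proof
        assume h: "dvdM (md d z) (s \<otimes> md d n)"
        show "z \<in> Y \<and> z \<prec> n \<oplus> O1"
        proof (cases "z = n")
          case True then show ?thesis using \<open>n \<in> Y \<and> n \<prec> N\<close> less_suc_self by blast
        next
          case False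
          have cop: "coprime (md d z) (md d n)"
          proof (cases "z \<prec> n")
            case True then show ?thesis using coprime_md[OF d, where z=z and z'=n] \<open>n \<in> Y \<and> n \<prec> N\<close> by blast
          next
            case False then have "n \<prec> z" using \<open>z \<noteq> n\<close> not_less by blast
            then show ?thesis using coprime_md[OF d, where z=n and z'=z] z coprime_sym by blast
          qed
          have "dvdM (md d z) (md d n \<otimes> s)" using h by (simp add: mult_comm)
          then have "dvdM (md d z) s" using euclid[OF _ _ cop] md_gt1[OF d(1)] less_trans zero_less_one by blast
          then show ?thesis using s z by (simp add: ax)
        qed
      next
        assume h: "z \<in> Y \<and> z \<prec> n \<oplus> O1"
        then have "z \<prec> n \<or> z = n" by (simp add: ax)
        then show "dvdM (md d z) (s \<otimes> md d n)"
        proof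
          assume "z \<prec> n" then have "dvdM (md d z) s" using s z h by blast
          then show ?thesis by (rule dvd_mult)
        next
          assume "z = n" then show ?thesis by (simp add: dvd_mult2)
        qed
      qed
      then show ?thesis by blast
    next
      case False
      have "dvdM (md d z) s \<longleftrightarrow> z \<in> Y \<and> z \<prec> n \<oplus> O1" if z: "z \<prec> N" for z
        using s[OF z] False z by (auto simp: ax)
      then show ?thesis by blast
    qed
  qed (use Y in \<open>auto simp: dvdM_def md_def\<close>)
  then show ?thesis by blast
qed

lemma seq_exists:
  assumes Y: "Y \<in> sets M" and fn: "\<And>i. i \<prec> n \<Longrightarrow> \<exists>!y. pr M i y \<in> Y"
  shows "\<exists>c. len c n \<and> (\<forall>i y. i \<prec> n \<longrightarrow> (dec c i y \<longleftrightarrow> pr M i y \<in> Y))"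
proof -
  have "\<forall>m. m \<preceq> n \<longrightarrow> (\<exists>B. \<forall>i y. i \<prec> m \<and> pr M i y \<in> Y \<longrightarrow> pr M i y \<prec> B)"
  proof (rule indE[where E="\<lambda>_. Y" and e="\<lambda>_. n" and v=0 and
        p="Imp (Leq (Var 0) (Var 1)) (ExN 2 (AllN 3 (AllN 4 (Imp (Conj (Less (Var 3) (Var 0)) (In (PRt (Var 3) (Var 4)) 0)) (Less (PRt (Var 3) (Var 4)) (Var 2))))))"])
    fix m assume IH: "m \<preceq> n \<longrightarrow> (\<exists>B. \<forall>i y. i \<prec> m \<and> pr M i y \<in> Y \<longrightarrow> pr M i y \<prec> B)"
    show "m \<oplus> O1 \<preceq> n \<longrightarrow> (\<exists>B. \<forall>i y. i \<prec> m \<oplus> O1 \<and> pr M i y \<in> Y \<longrightarrow> pr M i y \<prec> B)"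
    proof
      assume "m \<oplus> O1 \<preceq> n"
      then have mn: "m \<prec> n" using suc_le_iff by blast
      then obtain B where B: "\<And>i y. i \<prec> m \<and> pr M i y \<in> Y \<Longrightarrow> pr M i y \<prec> B" using IH by blast
      obtain y0 where y0: "pr M m y0 \<in> Y" "\<And>y. pr M m y \<in> Y \<Longrightarrow> y = y0" using fn[OF mn] by blast
      define B' where "B' = (if B \<prec> pr M m y0 \<oplus> O1 then pr M m y0 \<oplus> O1 else B)"
      have BB: "B \<preceq> B'" "pr M m y0 \<oplus> O1 \<preceq> B'" using not_less unfolding B'_def by auto
      have "pr M i y \<prec> B'" if "i \<prec> m \<oplus> O1 \<and> pr M i y \<in> Y" for i y
      proof -
        have "i \<prec> m \<or> i = m" using that by (simp add: ax)
        then show ?thesis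
        proof
          assume "i \<prec> m" then show ?thesis using B that BB L.less_le_trans by blast
        next
          assume "i = m" then have "y = y0" using y0 that by blast
          then show ?thesis using \<open>i = m\<close> BB less_suc_self L.less_le_trans by blast
        qed
      qed
      then show "\<exists>B. \<forall>i y. i \<prec> m \<oplus> O1 \<and> pr M i y \<in> Y \<longrightarrow> pr M i y \<prec> B" by blast
    qed
  qed (use Y in \<open>simp_all add: ax\<close>)
  then obtain B where B: "\<And>i y. i \<prec> n \<and> pr M i y \<in> Y \<Longrightarrow> pr M i y \<prec> B" by blast
  obtain d where d: "Z \<prec> d" "\<And>k. Z \<prec> k \<and> k \<preceq> B \<Longrightarrow> dvdM k d" using lcm_exists by blast
  let ?Y' = "{z. \<exists>i y. z = pr M i y \<and> i \<prec> n \<and> pr M i y \<in> Y}"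
  have Y': "?Y' \<in> sets M"
    by (rule defset[where E="\<lambda>_. Y" and e="\<lambda>_. n" and v=0 and
        p="ExN 2 (ExN 3 (Conj (Equ (Var 0) (PRt (Var 2) (Var 3))) (Conj (Less (Var 2) (Var 1)) (In (PRt (Var 2) (Var 3)) 0))))"])
       (use Y in simp_all)
  obtain s where s: "\<And>z. z \<prec> B \<Longrightarrow> (dvdM (md d z) s \<longleftrightarrow> z \<in> ?Y')" using setcode[OF d Y'] by blast
  have "len (code n B d s) n" by (auto simp: len_def)
  moreover have "dec (code n B d s) i y \<longleftrightarrow> pr M i y \<in> Y" if i: "i \<prec> n" for i y
  proof
    assume "dec (code n B d s) i y"
    then have "pr M i y \<prec> B" "dvdM (md d (pr M i y)) s" by (auto simp: dec_code)
    then show "pr M i y \<in> Y" using s by auto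
  next
    assume "pr M i y \<in> Y"
    then have "pr M i y \<prec> B" "pr M i y \<in> ?Y'" using B i by blast+
    then show "dec (code n B d s) i y" using s i by (simp add: dec_code)
  qed
  ultimately show ?thesis by blast
qed

end


definition validF :: "nat \<Rightarrow> trm \<Rightarrow> afm" where
  "validF b t = ExN (b+1) (Conj (lenF (b+10) t (Var (b+1)))
    (Conj (AllN (b+2) (Imp (Less (Var (b+2)) (Var (b+1))) (ExN (b+3) (decF (b+10) t (Var (b+2)) (Var (b+3))))))
    (Conj (AllN (b+2) (AllN (b+3) (AllN (b+4) (Imp (Conj (decF (b+10) t (Var (b+2)) (Var (b+3))) (decF (b+10) t (Var (b+2)) (Var (b+4)))) (Equ (Var (b+3)) (Var (b+4)))))))
    (Conj (AllN (b+2) (AllN (b+3) (Imp (decF (b+10) t (Var (b+2)) (Var (b+3))) (ExN (b+4) (ExN (b+5) (Conj (Equ (Var (b+3)) (PRt (Var (b+4)) (Var (b+5)))) (Conj (In (Var (b+4)) 0) (In (Var (b+5)) 2))))))))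
    (AllN (b+2) (AllN (b+3) (AllN (b+4) (AllN (b+5) (AllN (b+6) (Imp (Conj (decF (b+10) t (Var (b+2)) (PRt (Var (b+3)) (Var (b+4)))) (decF (b+10) t (Add (Var (b+2)) One) (PRt (Var (b+5)) (Var (b+6))))) (Conj (In (PRt (Var (b+5)) (Var (b+3))) 1) (In (PRt (Var (b+6)) (Var (b+4))) 3))))))))))))"

definition sameF :: "nat \<Rightarrow> trm \<Rightarrow> trm \<Rightarrow> afm" where
  "sameF b t t' = Conj (ExN (b+1) (Conj (lenF (b+10) t (Var (b+1))) (lenF (b+10) t' (Var (b+1)))))
     (AllN (b+2) (AllN (b+3) (Iff (decF (b+10) t (Var (b+2)) (Var (b+3))) (decF (b+10) t' (Var (b+2)) (Var (b+3))))))"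

definition nodeF :: "nat \<Rightarrow> trm \<Rightarrow> afm" where
  "nodeF b t = Conj (validF b t) (AllN (b+1) (Imp (Less (Var (b+1)) t) (Neg (sameF (b+20) (Var (b+1)) t))))"

definition KBF :: "nat \<Rightarrow> trm \<Rightarrow> trm \<Rightarrow> afm" where
  "KBF b t t' = Or
    (ExN (b+1) (ExN (b+2) (Conj (lenF (b+10) t (Var (b+1))) (Conj (lenF (b+10) t' (Var (b+2)))
       (Conj (Less (Var (b+2)) (Var (b+1))) (AllN (b+3) (AllN (b+4) (Imp (decF (b+10) t' (Var (b+3)) (Var (b+4))) (decF (b+10) t (Var (b+3)) (Var (b+4)))))))))))
    (ExN (b+1) (ExN (b+2) (ExN (b+3) (Conj (decF (b+10) t (Var (b+1)) (Var (b+2))) (Conj (decF (b+10) t' (Var (b+1)) (Var (b+3)))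
       (Conj (Less (Var (b+2)) (Var (b+3))) (AllN (b+4) (AllN (b+5) (Imp (Conj (Less (Var (b+4)) (Var (b+1))) (decF (b+10) t' (Var (b+4)) (Var (b+5)))) (decF (b+10) t (Var (b+4)) (Var (b+5))))))))))))"

definition thDc :: afm where "thDc = nodeF 100 (Var 0)"
definition thRc :: afm where
  "thRc = ExN 1 (ExN 2 (Conj (Equ (Var 0) (PRt (Var 1) (Var 2))) (Conj (nodeF 100 (Var 1)) (Conj (nodeF 100 (Var 2)) (KBF 100 (Var 1) (Var 2))))))"

locale aca4 = aca +
  fixes DA RA DB RB :: "nat set"
  assumes sDA: "DA \<in> sets M" and sRA: "RA \<in> sets M" and sDB: "DB \<in> sets M" and sRB: "RB \<in> sets M"
    and loA: "LO M DA RA" and loB: "LO M DB RB"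
begin

definition valid :: "nat \<Rightarrow> bool" where
  "valid c \<longleftrightarrow> (\<exists>n. len c n \<and> (\<forall>i. i \<prec> n \<longrightarrow> (\<exists>y. dec c i y))
     \<and> (\<forall>i y y'. dec c i y \<and> dec c i y' \<longrightarrow> y = y')
     \<and> (\<forall>i y. dec c i y \<longrightarrow> (\<exists>x w. y = pr M x w \<and> x \<in> DA \<and> w \<in> DB))
     \<and> (\<forall>i x w x' w'. dec c i (pr M x w) \<and> dec c (i \<oplus> O1) (pr M x' w') \<longrightarrow> pr M x' x \<in> RA \<and> pr M w' w \<in> RB))"

definition same :: "nat \<Rightarrow> nat \<Rightarrow> bool" where
  "same c c' \<longleftrightarrow> (\<exists>n. len c n \<and> len c' n) \<and> (\<forall>i y. dec c i y \<longleftrightarrow> dec c' i y)"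

definition node :: "nat \<Rightarrow> bool" where
  "node c \<longleftrightarrow> valid c \<and> (\<forall>c'. c' \<prec> c \<longrightarrow> \<not> same c' c)"

definition KB :: "nat \<Rightarrow> nat \<Rightarrow> bool" where
  "KB c c' \<longleftrightarrow> (\<exists>n n'. len c n \<and> len c' n' \<and> n' \<prec> n \<and> (\<forall>i y. dec c' i y \<longrightarrow> dec c i y))
     \<or> (\<exists>i y y'. dec c i y \<and> dec c' i y' \<and> y \<prec> y' \<and> (\<forall>j z. j \<prec> i \<and> dec c' j z \<longrightarrow> dec c j z))"

lemma sat_validF[simp]:
  assumes "E 0 = DA" "E 1 = RA" "E 2 = DB" "E 3 = RB" "below (b+1) t"
  shows "sat M e E (validF b t) \<longleftrightarrow> valid (ev M e t)"
proof -
  have [simp]: "below (b+10) t" using assms(5) below_mono by fastforce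
  have [simp]: "\<And>v. b < v \<Longrightarrow> v \<notin> tvars t" using assms(5) below_notin by fastforce
  show ?thesis using assms(1-4) by (simp add: validF_def valid_def)
qed

lemma sat_sameF[simp]:
  assumes "below (b+1) t" "below (b+1) t'"
  shows "sat M e E (sameF b t t') \<longleftrightarrow> same (ev M e t) (ev M e t')"
proof -
  have [simp]: "below (b+10) t" "below (b+10) t'" using assms below_mono by fastforce+
  have [simp]: "\<And>v. b < v \<Longrightarrow> v \<notin> tvars t" "\<And>v. b < v \<Longrightarrow> v \<notin> tvars t'" using assms below_notin by fastforce+
  show ?thesis by (simp add: sameF_def same_def)
qed

lemma sat_nodeF[simp]:
  assumes "E 0 = DA" "E 1 = RA" "E 2 = DB" "E 3 = RB" "below (b+1) t"
  shows "sat M e E (nodeF b t) \<longleftrightarrow> node (ev M e t)"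
proof -
  have [simp]: "below (b+21) t" using assms(5) below_mono by fastforce
  have [simp]: "\<And>v. b < v \<Longrightarrow> v \<notin> tvars t" using assms(5) below_notin by fastforce
  have s: "sat M e' E (sameF (b+20) (Var (Suc b)) t) \<longleftrightarrow> same (e' (Suc b)) (ev M e' t)" for e'
  proof -
    have h1: "below (b+20+1) t" using below_mono[OF assms(5)] by simp
    have h2: "below (b+20+1) (Var (Suc b))" by simp
    show ?thesis using sat_sameF[OF h2 h1, of e' E] by simp
  qed
  show ?thesis using assms by (simp add: nodeF_def node_def s)
qed

lemma sat_KBF[simp]:
  assumes "below (b+1) t" "below (b+1) t'"
  shows "sat M e E (KBF b t t') \<longleftrightarrow> KB (ev M e t) (ev M e t')"
proof -
  have [simp]: "below (b+10) t" "below (b+10) t'" using assms below_mono by fastforce+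
  have [simp]: "\<And>v. b < v \<Longrightarrow> v \<notin> tvars t" "\<And>v. b < v \<Longrightarrow> v \<notin> tvars t'" using assms below_notin by fastforce+
  show ?thesis by (simp add: KBF_def KB_def)
qed

definition Dd where "Dd = {a. node a}"
definition Rd where "Rd = {a. \<exists>c c'. a = pr M c c' \<and> node c \<and> node c' \<and> KB c c'}"

lemma env4_simps[simp]: "env4 DA RA DB RB 0 = DA" "env4 DA RA DB RB 1 = RA"
  "env4 DA RA DB RB 2 = DB" "env4 DA RA DB RB 3 = RB"
  by (simp_all add: env4_def)

lemma cterm_D: "cterm M thDc e DA RA DB RB = Dd"
  by (simp add: cterm_def thDc_def Dd_def env4_def)

lemma cterm_R: "cterm M thRc e DA RA DB RB = Rd"
  by (simp add: cterm_def thRc_def Rd_def env4_def)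

end


context aca4 begin

lemma loA_parts:
  "pr M x y \<in> RA \<Longrightarrow> x \<in> DA \<and> y \<in> DA" "pr M x x \<notin> RA"
  "pr M x y \<in> RA \<Longrightarrow> pr M y z \<in> RA \<Longrightarrow> pr M x z \<in> RA"
  "x \<in> DA \<Longrightarrow> y \<in> DA \<Longrightarrow> pr M x y \<in> RA \<or> x = y \<or> pr M y x \<in> RA"
  using loA unfolding LO_def by blast+

lemma loB_parts:
  "pr M x y \<in> RB \<Longrightarrow> x \<in> DB \<and> y \<in> DB" "pr M x x \<notin> RB"
  "pr M x y \<in> RB \<Longrightarrow> pr M y z \<in> RB \<Longrightarrow> pr M x z \<in> RB"
  "x \<in> DB \<Longrightarrow> y \<in> DB \<Longrightarrow> pr M x y \<in> RB \<or> x = y \<or> pr M y x \<in> RB"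
  using loB unfolding LO_def by blast+

lemma validD:
  assumes "valid c"
  obtains n where "len c n" "\<And>i. i \<prec> n \<Longrightarrow> \<exists>y. dec c i y"
    "\<And>i y y'. dec c i y \<Longrightarrow> dec c i y' \<Longrightarrow> y = y'"
    "\<And>i y. dec c i y \<Longrightarrow> \<exists>x w. y = pr M x w \<and> x \<in> DA \<and> w \<in> DB"
    "\<And>i x w x' w'. dec c i (pr M x w) \<Longrightarrow> dec c (i \<oplus> O1) (pr M x' w') \<Longrightarrow> pr M x' x \<in> RA \<and> pr M w' w \<in> RB"
  using assms unfolding valid_def apply (elim exE conjE) apply (rule that) apply blast+ done

lemma valid_uniq: "valid c \<Longrightarrow> dec c i y \<Longrightarrow> dec c i y' \<Longrightarrow> y = y'"
  unfolding valid_def by blast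

lemma valid_fill: "valid c \<Longrightarrow> len c n \<Longrightarrow> i \<prec> n \<Longrightarrow> \<exists>y. dec c i y"
  unfolding valid_def by (metis len_unique)

lemma KB_irrefl: "valid c \<Longrightarrow> \<not> KB c c"
  unfolding KB_def using len_unique valid_uniq by (metis less_irrefl)

lemma KB_trans:
  assumes v1: "valid c1" and v2: "valid c2" and v3: "valid c3"
    and k12: "KB c1 c2" and k23: "KB c2 c3"
  shows "KB c1 c3"
proof -
  from k12[unfolded KB_def] show ?thesis
  proof (elim disjE exE conjE)
    fix n1 n2 assume l1: "len c1 n1" and l2: "len c2 n2" and n21: "n2 \<prec> n1"
      and P12: "\<forall>i y. dec c2 i y \<longrightarrow> dec c1 i y"
    from k23[unfolded KB_def] show ?thesis
    proof (elim disjE exE conjE)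
      fix m2 n3 assume l2': "len c2 m2" and l3: "len c3 n3" and n32: "n3 \<prec> m2"
        and P23: "\<forall>i y. dec c3 i y \<longrightarrow> dec c2 i y"
      have "m2 = n2" using l2 l2' len_unique by blast
      then have "n3 \<prec> n1" using n32 n21 less_trans by blast
      then show ?thesis unfolding KB_def using l1 l3 P12 P23 by blast
    next
      fix i y y' assume d2: "dec c2 i y" and d3: "dec c3 i y'" and yy: "y \<prec> y'"
        and A23: "\<forall>j z. j \<prec> i \<and> dec c3 j z \<longrightarrow> dec c2 j z"
      have "dec c1 i y" using P12 d2 by blast
      moreover have "\<forall>j z. j \<prec> i \<and> dec c3 j z \<longrightarrow> dec c1 j z" using A23 P12 by blast
      ultimately show ?thesis unfolding KB_def using d3 yy by blast
    qed
  next
    fix i y y' assume d1: "dec c1 i y" and d2: "dec c2 i y'" and yy: "y \<prec> y'"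
      and A12: "\<forall>j z. j \<prec> i \<and> dec c2 j z \<longrightarrow> dec c1 j z"
    from k23[unfolded KB_def] show ?thesis
    proof (elim disjE exE conjE)
      fix n2 n3 assume l2: "len c2 n2" and l3: "len c3 n3" and n32: "n3 \<prec> n2"
        and P23: "\<forall>i y. dec c3 i y \<longrightarrow> dec c2 i y"
      show ?thesis
      proof (cases "i \<prec> n3")
        case True
        then obtain y3 where y3: "dec c3 i y3" using valid_fill[OF v3 l3] by blast
        then have "y3 = y'" using P23 d2 valid_uniq[OF v2] by blast
        moreover have "\<forall>j z. j \<prec> i \<and> dec c3 j z \<longrightarrow> dec c1 j z" using A12 P23 by blast
        ultimately show ?thesis unfolding KB_def using d1 y3 yy by blast
      next
        case False
        then have ni: "n3 \<preceq> i" using not_less by blast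
        have "\<forall>j z. dec c3 j z \<longrightarrow> dec c1 j z"
        proof (intro allI impI)
          fix j z assume "dec c3 j z"
          then have "j \<prec> n3" using dec_len2 l3 by blast
          then have "j \<prec> i" using ni L.less_le_trans by blast
          then show "dec c1 j z" using A12 P23 \<open>dec c3 j z\<close> by blast
        qed
        moreover obtain n1 where l1: "len c1 n1" and "i \<prec> n1" using dec_len d1 by blast
        ultimately show ?thesis unfolding KB_def using l3 ni L.le_less_trans by blast
      qed
    next
      fix k u u' assume d2': "dec c2 k u" and d3: "dec c3 k u'" and uu: "u \<prec> u'"
        and A23: "\<forall>j z. j \<prec> k \<and> dec c3 j z \<longrightarrow> dec c2 j z"
      consider "i \<prec> k" | "k \<prec> i" | "i = k" using trich by blast
      then show ?thesis
      proof cases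
        case 1
        obtain n3 where l3: "len c3 n3" and "k \<prec> n3" using dec_len d3 by blast
        then have "i \<prec> n3" using 1 less_trans by blast
        then obtain y3 where y3: "dec c3 i y3" using valid_fill[OF v3 l3] by blast
        then have "y3 = y'" using A23 1 d2 valid_uniq[OF v2] by blast
        moreover have "\<forall>j z. j \<prec> i \<and> dec c3 j z \<longrightarrow> dec c1 j z" using A12 A23 1 less_trans by blast
        ultimately show ?thesis unfolding KB_def using d1 y3 yy by blast
      next
        case 2
        have "dec c1 k u" using A12 2 d2' by blast
        moreover have "\<forall>j z. j \<prec> k \<and> dec c3 j z \<longrightarrow> dec c1 j z" using A12 A23 2 less_trans by blast
        ultimately show ?thesis unfolding KB_def using d3 uu by blast
      next
        case 3
        then have "y' = u" using d2 d2' valid_uniq[OF v2] by blast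
        then have "y \<prec> u'" using yy uu less_trans by blast
        moreover have "\<forall>j z. j \<prec> i \<and> dec c3 j z \<longrightarrow> dec c1 j z" using A12 A23 3 by blast
        ultimately show ?thesis unfolding KB_def using d1 d3 3 by blast
      qed
    qed
  qed
qed

lemma same_sym: "same c c' \<Longrightarrow> same c' c" unfolding same_def by blast

lemma node_eq: "node c \<Longrightarrow> node c' \<Longrightarrow> same c c' \<Longrightarrow> c = c'"
  unfolding node_def using trich same_sym by metis

lemma KB_total:
  assumes nc: "node c" and nc': "node c'" and ne: "c \<noteq> c'"
  shows "KB c c' \<or> KB c' c"
proof -
  have vc: "valid c" and vc': "valid c'" using nc nc' node_def by blast+
  obtain n where ln: "len c n" using vc validD by metis
  obtain n' where ln': "len c' n'" using vc' validD by metis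
  let ?P = "\<lambda>i. i \<prec> n \<and> i \<prec> n' \<and> \<not> (\<forall>y. dec c i y \<longleftrightarrow> dec c' i y)"
  show ?thesis
  proof (cases "\<exists>i. ?P i")
    case True
    then obtain i0 where "?P i0" by blast
    have "\<exists>i. ?P i \<and> (\<forall>j. ?P j \<longrightarrow> i \<preceq> j)"
      by (rule lnp[where E=E0 and e="\<lambda>k. if k = 1 then c else if k = 2 then c' else if k = 3 then n else n'" and v=0 and
          p="Conj (Less (Var 0) (Var 3)) (Conj (Less (Var 0) (Var 4)) (Neg (AllN 5 (Iff (decF 10 (Var 1) (Var 0) (Var 5)) (decF 10 (Var 2) (Var 0) (Var 5))))))"
          and x=i0]) (use \<open>?P i0\<close> in simp_all)
    then obtain i where Pi: "?P i" and imin: "\<And>j. ?P j \<Longrightarrow> i \<preceq> j" by blast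
    obtain y where y: "dec c i y" using valid_fill[OF vc ln] Pi by blast
    obtain y' where y': "dec c' i y'" using valid_fill[OF vc' ln'] Pi by blast
    have "y \<noteq> y'"
    proof
      assume "y = y'"
      then have "\<forall>z. dec c i z \<longleftrightarrow> dec c' i z" using y y' valid_uniq[OF vc] valid_uniq[OF vc'] by blast
      then show False using Pi by blast
    qed
    have agree: "dec c j z \<longleftrightarrow> dec c' j z" if j: "j \<prec> i" for j z
    proof -
      have "j \<prec> n" "j \<prec> n'" using j Pi less_trans by blast+
      moreover have "\<not> i \<preceq> j" using j less_asym by blast
      ultimately show ?thesis using imin[of j] by blast
    qed
    consider "y \<prec> y'" | "y' \<prec> y" using trich \<open>y \<noteq> y'\<close> by blast
    then show ?thesis
    proof cases
      case 1 then have "KB c c'" unfolding KB_def using y y' agree by blast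
      then show ?thesis by blast
    next
      case 2 then have "KB c' c" unfolding KB_def using y y' agree by blast
      then show ?thesis by blast
    qed
  next
    case False
    then have agree: "i \<prec> n \<Longrightarrow> i \<prec> n' \<Longrightarrow> (dec c i y \<longleftrightarrow> dec c' i y)" for i y by blast
    consider "n = n'" | "n' \<prec> n" | "n \<prec> n'" using trich by blast
    then show ?thesis
    proof cases
      case 1
      have "same c c'" unfolding same_def
      proof
        show "\<exists>m. len c m \<and> len c' m" using ln ln' 1 by blast
        show "\<forall>i y. dec c i y \<longleftrightarrow> dec c' i y"
          using agree dec_len2 ln ln' 1 by blast
      qed
      then show ?thesis using node_eq nc nc' ne by blast
    next
      case 2
      have "\<forall>i y. dec c' i y \<longrightarrow> dec c i y"
        using agree dec_len2 ln' 2 less_trans by blast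
      then show ?thesis unfolding KB_def using ln ln' 2 by blast
    next
      case 3
      have "\<forall>i y. dec c i y \<longrightarrow> dec c' i y"
        using agree dec_len2 ln 3 less_trans by blast
      then show ?thesis unfolding KB_def using ln ln' 3 by blast
    qed
  qed
qed

lemma Rd_iff: "pr M x y \<in> Rd \<longleftrightarrow> node x \<and> node y \<and> KB x y"
  unfolding Rd_def by auto

lemma LO_disj: "LO M Dd Rd"
proof -
  have 1: "\<forall>x y. pr M x y \<in> Rd \<longrightarrow> x \<in> Dd \<and> y \<in> Dd" by (simp add: Rd_iff Dd_def)
  have 2: "\<forall>x. pr M x x \<notin> Rd" using KB_irrefl node_def Rd_iff by blast
  have 3: "\<forall>x y z. pr M x y \<in> Rd \<and> pr M y z \<in> Rd \<longrightarrow> pr M x z \<in> Rd"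
    using KB_trans node_def Rd_iff by metis
  have 4: "\<forall>x\<in>Dd. \<forall>y\<in>Dd. pr M x y \<in> Rd \<or> x = y \<or> pr M y x \<in> Rd"
    using KB_total Rd_iff Dd_def by auto
  show ?thesis unfolding LO_def using 1 2 3 4 by blast
qed

end


context aca4 begin

lemma env4_sets: "env4 DA RA DB RB i \<in> sets M"
  using sDA sRA sDB sRB by (simp add: env4_def)

lemma Dd_sets: "Dd \<in> sets M"
  using compr[of "env4 DA RA DB RB" "\<lambda>_. 0" 0 thDc, OF env4_sets] cterm_D
  unfolding cterm_def by simp

lemma Rd_sets: "Rd \<in> sets M"
  using compr[of "env4 DA RA DB RB" "\<lambda>_. 0" 0 thRc, OF env4_sets] cterm_R
  unfolding cterm_def by simp

definition envH :: "nat set \<Rightarrow> nat \<Rightarrow> nat set" where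
  "envH H i = (if i = 0 then DA else if i = 1 then RA else if i = 2 then DB else if i = 3 then RB
     else if i = 4 then Dd else if i = 5 then Rd else H)"

lemma envH_sets: "H \<in> sets M \<Longrightarrow> envH H i \<in> sets M"
  using sDA sRA sDB sRB Dd_sets Rd_sets by (simp add: envH_def)

end

definition psbody :: "nat \<Rightarrow> trm \<Rightarrow> trm \<Rightarrow> trm \<Rightarrow> afm" where
  "psbody b tn tK tc = Conj (In (PRt tK tc) 6) (Conj (ExN (b+3) (Conj (lenF (b+20) tc (Var (b+3))) (Leq tn (Var (b+3)))))
     (AllN (b+4) (AllN (b+5) (AllN (b+7) (AllN (b+8) (Imp (Conj (Leq tK (Var (b+4))) (Conj (In (PRt (Var (b+4)) (Var (b+5))) 6)
       (Conj (Less (Var (b+7)) tn) (decF (b+20) tc (Var (b+7)) (Var (b+8)))))) (decF (b+20) (Var (b+5)) (Var (b+7)) (Var (b+8)))))))))"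

locale aca4H = aca4 +
  fixes H :: "nat set"
  assumes sH: "H \<in> sets M" and dH: "desc_seq M Dd Rd H"
begin

definition PSH :: "nat \<Rightarrow> nat \<Rightarrow> nat \<Rightarrow> bool" where
  "PSH n K c \<longleftrightarrow> pr M K c \<in> H \<and> (\<exists>m. len c m \<and> (n \<prec> m \<or> n = m))
     \<and> (\<forall>k c' j y. (K \<prec> k \<or> K = k) \<and> pr M k c' \<in> H \<and> j \<prec> n \<and> dec c j y \<longrightarrow> dec c' j y)"

lemma sat_psbody[simp]:
  assumes "E 6 = H" "below b tn" "below b tK" "below b tc"
  shows "sat M e E (psbody b tn tK tc) \<longleftrightarrow> PSH (ev M e tn) (ev M e tK) (ev M e tc)"
proof -
  have [simp]: "\<And>v. b \<le> v \<Longrightarrow> v \<notin> tvars tn" "\<And>v. b \<le> v \<Longrightarrow> v \<notin> tvars tK" "\<And>v. b \<le> v \<Longrightarrow> v \<notin> tvars tc"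
    using assms below_notin by blast+
  have [simp]: "below (b+20) tn" "below (b+20) tK" "below (b+20) tc" using assms below_mono by fastforce+
  show ?thesis using assms(1) by (simp add: psbody_def PSH_def)
qed

definition h :: "nat \<Rightarrow> nat" where "h k = (THE c. pr M k c \<in> H)"

lemma hH: "pr M k (h k) \<in> H" and h_uniq: "pr M k c \<in> H \<Longrightarrow> c = h k"
proof -
  have "\<exists>!c. pr M k c \<in> H" using dH unfolding desc_seq_def by blast
  then show "pr M k (h k) \<in> H" unfolding h_def by (rule theI')
  then show "pr M k c \<in> H \<Longrightarrow> c = h k" using \<open>\<exists>!c. pr M k c \<in> H\<close> by blast
qed

lemma h_node: "node (h k)" and h_step: "KB (h (k \<oplus> O1)) (h k)"
proof -
  have "h k \<in> Dd \<and> h (k \<oplus> O1) \<in> Dd \<and> pr M (h (k \<oplus> O1)) (h k) \<in> Rd"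
    using dH hH[of k] hH[of "k \<oplus> O1"] unfolding desc_seq_def by blast
  then show "node (h k)" "KB (h (k \<oplus> O1)) (h k)" by (auto simp: Dd_def Rd_iff)
qed

lemma h_valid: "valid (h k)" using h_node node_def by blast

lemma h_dec: "k \<prec> k' \<Longrightarrow> KB (h k') (h k)"
proof -
  assume kk: "k \<prec> k'"
  have "\<forall>k'. k \<prec> k' \<longrightarrow> (\<exists>c c'. pr M k c \<in> H \<and> pr M k' c' \<in> H \<and> pr M c' c \<in> Rd)"
  proof (rule indE[where E="envH H" and e="\<lambda>_. k" and v=0 and
      p="Imp (Less (Var 1) (Var 0)) (ExN 2 (ExN 3 (Conj (In (PRt (Var 1) (Var 2)) 6) (Conj (In (PRt (Var 0) (Var 3)) 6) (In (PRt (Var 3) (Var 2)) 5)))))"])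
    fix n assume IH: "k \<prec> n \<longrightarrow> (\<exists>c c'. pr M k c \<in> H \<and> pr M n c' \<in> H \<and> pr M c' c \<in> Rd)"
    show "k \<prec> n \<oplus> O1 \<longrightarrow> (\<exists>c c'. pr M k c \<in> H \<and> pr M (n \<oplus> O1) c' \<in> H \<and> pr M c' c \<in> Rd)"
    proof
      assume "k \<prec> n \<oplus> O1"
      then have "k \<prec> n \<or> k = n" by (simp add: ax)
      then show "\<exists>c c'. pr M k c \<in> H \<and> pr M (n \<oplus> O1) c' \<in> H \<and> pr M c' c \<in> Rd"
      proof
        assume "k \<prec> n"
        then obtain c c' where "pr M k c \<in> H" "pr M n c' \<in> H" "pr M c' c \<in> Rd" using IH by blast
        then have "c = h k" "c' = h n" "KB (h n) (h k)" using h_uniq Rd_iff by blast+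
        then have "KB (h (n \<oplus> O1)) (h k)" using KB_trans h_valid h_step by blast
        then show ?thesis using hH h_node Rd_iff by blast
      next
        assume "k = n" then show ?thesis using hH h_node h_step Rd_iff by blast
      qed
    qed
  qed (rule envH_sets[OF sH], simp add: envH_def, simp add: ax)
  then show ?thesis using kk h_uniq Rd_iff by blast
qed


lemma h_len: "\<exists>m. len (h k) m"
  using h_valid validD by metis

lemma PS_step:
  assumes "PSH n K c"
  shows "\<exists>K' c'. PSH (n \<oplus> O1) K' c'"
proof -
  have cK: "c = h K" using assms h_uniq unfolding PSH_def by blast
  obtain mc where lc: "len c mc" and nmc: "n \<preceq> mc" using assms unfolding PSH_def by blast
  have fillc: "\<exists>y. dec c j y" if "j \<prec> n" for j
    using valid_fill[OF h_valid[of K] _ L.less_le_trans[OF that nmc]] lc cK by blast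
  have agree: "dec (h k) j y" if "K \<preceq> k" "j \<prec> n" "dec c j y" for k j y
    using assms that hH unfolding PSH_def by blast
  have agree3: "dec c j y" if a3: "K \<preceq> k" "j \<prec> n" "dec (h k) j y" for k j y
  proof -
    obtain y0 where y0: "dec c j y0" using fillc a3(2) by blast
    then have "dec (h k) j y0" using agree a3 by blast
    then show ?thesis using valid_uniq[OF h_valid] a3(3) y0 by metis
  qed
  have lenge: "n \<preceq> m" if lg: "K \<preceq> k" "len (h k) m" for k m
  proof (cases "n = Z")
    case True then show ?thesis using zero_le by blast
  next
    case False
    then obtain n0 where n0: "n = n0 \<oplus> O1" using zero_or_suc by blast
    then have "n0 \<prec> n" using less_suc_self by blast
    then obtain y where "dec c n0 y" using fillc by blast
    then have "dec (h k) n0 y" using agree lg \<open>n0 \<prec> n\<close> by blast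
    then have "n0 \<prec> m" using dec_len2 lg(2) by blast
    then show ?thesis using n0 suc_le_iff by blast
  qed
  obtain K1 where KK1: "K \<preceq> K1" and K1: "\<And>k. K1 \<preceq> k \<Longrightarrow> \<exists>m. len (h k) m \<and> n \<prec> m"
  proof (cases "\<exists>k0. K \<preceq> k0 \<and> len (h k0) n")
    case True
    then obtain k0 where k0: "K \<preceq> k0" "len (h k0) n" by blast
    have "K \<preceq> k0 \<oplus> O1" using k0(1) less_suc_self L.le_less_trans by blast
    moreover have "\<exists>m. len (h k) m \<and> n \<prec> m" if kk: "k0 \<oplus> O1 \<preceq> k" for k
    proof -
      have k0k: "k0 \<prec> k" using kk suc_le_iff by blast
      then have Kk: "K \<preceq> k" using k0(1) L.le_less_trans by blast
      have kb: "KB (h k) (h k0)" using h_dec k0k by blast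
      obtain m where lm: "len (h k) m" using h_len by blast
      have "n \<preceq> m" using lenge Kk lm by blast
      moreover have "m \<noteq> n"
      proof
        assume mn: "m = n"
        from kb[unfolded KB_def] show False
        proof (elim disjE exE conjE)
          fix a b assume "len (h k) a" "len (h k0) b" "b \<prec> a"
          then show False using lm k0(2) mn len_unique by (metis less_irrefl)
        next
          fix i y y' assume d1: "dec (h k) i y" and d2: "dec (h k0) i y'" and yy: "y \<prec> y'"
          have "i \<prec> n" using d2 k0(2) dec_len2 by blast
          then have "dec c i y" "dec c i y'" using agree3 d1 d2 Kk k0(1) by blast+
          then show False using valid_uniq[OF h_valid[of K]] cK yy by (metis less_irrefl)
        qed
      qed
      ultimately show ?thesis using lm by blast
    qed
    ultimately show ?thesis using that by blast
  next
    case False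
    have "\<exists>m. len (h k) m \<and> n \<prec> m" if "K \<preceq> k" for k
    proof -
      obtain m where lm: "len (h k) m" using h_len by blast
      then have "n \<preceq> m" "m \<noteq> n" using lenge that False by blast+
      then show ?thesis using lm by blast
    qed
    then show ?thesis using that[of K] by blast
  qed
  have ventry: "\<exists>v. dec (h k) n v" if "K1 \<preceq> k" for k
    using K1[OF that] valid_fill[OF h_valid] by blast
  have KK: "K \<preceq> k" if "K1 \<preceq> k" for k using KK1 that L.order_trans by blast
  have claimB: "v' \<preceq> v" if kk: "K1 \<preceq> k" and dv: "dec (h k) n v" and dv': "dec (h (k \<oplus> O1)) n v'" for k v v'
  proof -
    have Kk: "K \<preceq> k" using KK kk by blast
    have Kk': "K \<preceq> k \<oplus> O1" using Kk less_suc_self L.le_less_trans by blast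
    from h_step[of k, unfolded KB_def] show ?thesis
    proof (elim disjE exE conjE)
      fix a b assume "\<forall>i y. dec (h k) i y \<longrightarrow> dec (h (k \<oplus> O1)) i y"
      then have "dec (h (k \<oplus> O1)) n v" using dv by blast
      then show ?thesis using dv' valid_uniq[OF h_valid] by blast
    next
      fix i y y' assume d1: "dec (h (k \<oplus> O1)) i y" and d2: "dec (h k) i y'" and yy: "y \<prec> y'"
        and A: "\<forall>j z. j \<prec> i \<and> dec (h k) j z \<longrightarrow> dec (h (k \<oplus> O1)) j z"
      consider "i \<prec> n" | "i = n" | "n \<prec> i" using trich by blast
      then show ?thesis
      proof cases
        case 1
        then have "dec c i y" "dec c i y'" using agree3 d1 d2 Kk Kk' by blast+
        then show ?thesis using valid_uniq[OF h_valid[of K]] cK yy by (metis less_irrefl)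
      next
        case 2
        then have "v' = y" "v = y'" using d1 d2 dv dv' valid_uniq[OF h_valid] by blast+
        then show ?thesis using yy by blast
      next
        case 3
        then have "dec (h (k \<oplus> O1)) n v" using A dv by blast
        then show ?thesis using dv' valid_uniq[OF h_valid] by blast
      qed
    qed
  qed
  obtain v0 where v0: "dec (h K1) n v0" using ventry by blast
  let ?V = "\<lambda>v. \<exists>k c'. (K1 \<prec> k \<or> K1 = k) \<and> pr M k c' \<in> H \<and> dec c' n v"
  have "\<exists>v. ?V v \<and> (\<forall>y. ?V y \<longrightarrow> v \<preceq> y)"
    by (rule lnp[where E="envH H" and e="\<lambda>i. if i = 1 then K1 else n" and v=0 and
        p="ExN 2 (ExN 3 (Conj (Leq (Var 1) (Var 2)) (Conj (In (PRt (Var 2) (Var 3)) 6) (decF 10 (Var 3) (Var 4) (Var 0)))))"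
        and x=v0])
       (use envH_sets[OF sH] v0 hH in \<open>auto simp: envH_def\<close>)
  then obtain vs where vsV: "?V vs" and vmin: "\<And>y. ?V y \<Longrightarrow> vs \<preceq> y" by blast
  then obtain ks cs where ks: "K1 \<preceq> ks" "pr M ks cs \<in> H" "dec cs n vs" by blast
  have "cs = h ks" using ks(2) h_uniq by blast
  then have vs: "K1 \<preceq> ks" "dec (h ks) n vs" using ks by simp_all
  have stab0: "\<forall>k. ks \<preceq> k \<longrightarrow> (\<exists>c' v. pr M k c' \<in> H \<and> dec c' n v \<and> v \<preceq> vs)"
  proof (rule indE[where E="envH H" and e="\<lambda>i. if i = 1 then ks else if i = 2 then n else vs" and v=0 and
      p="Imp (Leq (Var 1) (Var 0)) (ExN 4 (ExN 5 (Conj (In (PRt (Var 0) (Var 4)) 6) (Conj (decF 10 (Var 4) (Var 2) (Var 5)) (Leq (Var 5) (Var 3))))))"])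
    show "ks \<preceq> Z \<longrightarrow> (\<exists>c' v. pr M Z c' \<in> H \<and> dec c' n v \<and> v \<preceq> vs)"
    proof
      assume "ks \<preceq> Z" then have "ks = Z" using le_zero_iff by blast
      then show "\<exists>c' v. pr M Z c' \<in> H \<and> dec c' n v \<and> v \<preceq> vs" using vs(2) hH[of Z] by auto
    qed
  next
    fix k assume IH: "ks \<preceq> k \<longrightarrow> (\<exists>c' v. pr M k c' \<in> H \<and> dec c' n v \<and> v \<preceq> vs)"
    show "ks \<preceq> k \<oplus> O1 \<longrightarrow> (\<exists>c' v. pr M (k \<oplus> O1) c' \<in> H \<and> dec c' n v \<and> v \<preceq> vs)"
    proof
      assume a: "ks \<preceq> k \<oplus> O1"
      show "\<exists>c' v. pr M (k \<oplus> O1) c' \<in> H \<and> dec c' n v \<and> v \<preceq> vs"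
      proof (cases "ks = k \<oplus> O1")
        case True then show ?thesis using vs(2) hH by blast
      next
        case False
        then have "ks \<preceq> k" using a less_suc_iff by blast
        then obtain c' v where cv: "pr M k c' \<in> H" "dec c' n v" "v \<preceq> vs" using IH by blast
        have K1k: "K1 \<preceq> k" using vs(1) \<open>ks \<preceq> k\<close> L.order_trans by blast
        then have K1k': "K1 \<preceq> k \<oplus> O1" using less_suc_self L.le_less_trans by blast
        obtain v' where v': "dec (h (k \<oplus> O1)) n v'" using ventry K1k' by blast
        have "v' \<preceq> v" using claimB K1k cv v' h_uniq by blast
        then have "v' \<preceq> vs" using cv(3) L.order_trans by blast
        then show ?thesis using v' hH by blast
      qed
    qed
  qed (rule envH_sets[OF sH], simp add: envH_def)
  have stab: "v = vs" if st: "ks \<preceq> k" "dec (h k) n v" for k v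
  proof -
    obtain c' v' where "pr M k c' \<in> H" "dec c' n v'" "v' \<preceq> vs" using stab0 st(1) by blast
    then have "v \<preceq> vs" using st(2) h_uniq valid_uniq[OF h_valid] by blast
    moreover have "K1 \<preceq> k" using vs(1) st(1) L.order_trans by blast
    then have "vs \<preceq> v" using vmin st(2) hH by blast
    ultimately show ?thesis using less_asym by blast
  qed
  have Kks: "K \<preceq> ks" using KK vs(1) by blast
  obtain ms where lms: "len (h ks) ms" and nms: "n \<prec> ms" using K1 vs(1) by blast
  have "PSH (n \<oplus> O1) ks (h ks)"
    unfolding PSH_def
  proof (intro conjI allI impI)
    show "pr M ks (h ks) \<in> H" by (rule hH)
    show "\<exists>m. len (h ks) m \<and> (n \<oplus> O1 \<prec> m \<or> n \<oplus> O1 = m)" using lms nms suc_le_iff by blast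
  next
    fix k c' j y assume a: "(ks \<prec> k \<or> ks = k) \<and> pr M k c' \<in> H \<and> j \<prec> n \<oplus> O1 \<and> dec (h ks) j y"
    then have c': "c' = h k" using h_uniq by blast
    have Kk: "K \<preceq> k" using Kks a L.order_trans by blast
    have "j \<prec> n \<or> j = n" using a by (simp add: ax)
    then show "dec c' j y"
    proof
      assume "j \<prec> n"
      then have "dec c j y" using agree3 Kks a by blast
      then show ?thesis using agree Kk \<open>j \<prec> n\<close> c' by blast
    next
      assume jn: "j = n"
      then have "y = vs" using a stab by blast
      obtain v where v: "dec (h k) n v" using ventry KK vs(1) a L.order_trans by blast
      then have "v = vs" using stab a by blast
      then show ?thesis using v c' jn \<open>y = vs\<close> by blast
    qed
  qed
  then show ?thesis by blast
qed

lemma PS_all: "\<exists>K c. PSH n K c"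
proof -
  have "\<forall>n. \<exists>K c. PSH n K c"
  proof (rule indE[where E="envH H" and e="\<lambda>_. 0" and v=0 and p="ExN 1 (ExN 2 (psbody 10 (Var 0) (Var 1) (Var 2)))"])
    obtain m where "len (h Z) m" using h_len by blast
    then have "PSH Z Z (h Z)" unfolding PSH_def using hH zero_le ax(7) by blast
    then show "\<exists>K c. PSH Z K c" by blast
  next
    fix n assume "\<exists>K c. PSH n K c" then show "\<exists>K c. PSH (n \<oplus> O1) K c" using PS_step by blast
  qed (rule envH_sets[OF sH], simp add: envH_def)
  then show ?thesis by blast
qed

end

context aca4H begin

lemma PSH_c: "PSH n K c \<Longrightarrow> c = h K" unfolding PSH_def using h_uniq by blast

lemma PSH_ag: "PSH n K c \<Longrightarrow> K \<preceq> k \<Longrightarrow> j \<prec> n \<Longrightarrow> dec c j y \<Longrightarrow> dec (h k) j y"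
  unfolding PSH_def using hH by blast

definition Pth :: "nat \<Rightarrow> nat \<Rightarrow> bool" where
  "Pth n y \<longleftrightarrow> (\<exists>K c. PSH (n \<oplus> O1) K c \<and> dec c n y)"

lemma Pth_ex: "\<exists>y. Pth n y"
proof -
  obtain K c where ps: "PSH (n \<oplus> O1) K c" using PS_all by blast
  then have c: "c = h K" by (rule PSH_c)
  obtain m where lm: "len c m" "n \<oplus> O1 \<preceq> m" using ps unfolding PSH_def by blast
  then have "n \<prec> m" using suc_le_iff by blast
  then obtain y where "dec c n y" using valid_fill[OF h_valid] lm c by blast
  then show ?thesis unfolding Pth_def using ps by blast
qed

lemma Pth_common: "Pth n y \<Longrightarrow> Pth n' y' \<Longrightarrow> \<exists>k. dec (h k) n y \<and> dec (h k) n' y'"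
proof -
  assume "Pth n y" "Pth n' y'"
  then obtain K1 c1 K2 c2 where p1: "PSH (n \<oplus> O1) K1 c1" "dec c1 n y" and p2: "PSH (n' \<oplus> O1) K2 c2" "dec c2 n' y'"
    unfolding Pth_def by blast
  define k where "k = (if K1 \<prec> K2 then K2 else K1)"
  have k: "K1 \<preceq> k" "K2 \<preceq> k" unfolding k_def using not_less by auto
  have "dec (h k) n y" using PSH_ag[OF p1(1) k(1) less_suc_self p1(2)] .
  moreover have "dec (h k) n' y'" using PSH_ag[OF p2(1) k(2) less_suc_self p2(2)] .
  ultimately show ?thesis by blast
qed

lemma Pth_uniq: "Pth n y \<Longrightarrow> Pth n y' \<Longrightarrow> y = y'"
  using Pth_common valid_uniq[OF h_valid] by metis

lemma Pth_pair: "Pth n y \<Longrightarrow> \<exists>x w. y = pr M x w \<and> x \<in> DA \<and> w \<in> DB"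
proof -
  assume "Pth n y"
  then obtain k where "dec (h k) n y" using Pth_common by blast
  then show ?thesis using h_valid[of k] by (elim validD) blast
qed

lemma Pth_step: "Pth n (pr M x w) \<Longrightarrow> Pth (n \<oplus> O1) (pr M x' w') \<Longrightarrow> pr M x' x \<in> RA \<and> pr M w' w \<in> RB"
proof -
  assume "Pth n (pr M x w)" "Pth (n \<oplus> O1) (pr M x' w')"
  then obtain k where "dec (h k) n (pr M x w)" "dec (h k) (n \<oplus> O1) (pr M x' w')" using Pth_common by blast
  then show ?thesis using h_valid[of k] by (elim validD) blast
qed

lemma sat_Pth_helper:
  "sat M (e(0:=a)) (envH H) (ExN 1 (ExN 2 (ExN 5 (Conj (Equ (Var 0) (PRt (Var 1) (Var 2))) (ExN 3 (ExN 4 (Conj (psbody 10 (Add (Var 1) One) (Var 3) (Var 4)) (decF 40 (Var 4) (Var 1) (PRt (Var 2) (Var 5))))))))))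
   \<longleftrightarrow> (\<exists>n x w. a = pr M n x \<and> Pth n (pr M x w))"
  by (simp add: envH_def Pth_def)

lemma sat_Pth_helper2:
  "sat M (e(0:=a)) (envH H) (ExN 1 (ExN 2 (ExN 5 (Conj (Equ (Var 0) (PRt (Var 1) (Var 5))) (ExN 3 (ExN 4 (Conj (psbody 10 (Add (Var 1) One) (Var 3) (Var 4)) (decF 40 (Var 4) (Var 1) (PRt (Var 2) (Var 5))))))))))
   \<longleftrightarrow> (\<exists>n x w. a = pr M n w \<and> Pth n (pr M x w))"
  by (simp add: envH_def Pth_def)

lemma no_WO_both:
  "(\<exists>F\<in>sets M. desc_seq M DA RA F) \<and> (\<exists>F\<in>sets M. desc_seq M DB RB F)"
proof
  let ?F = "{a. \<exists>n x w. a = pr M n x \<and> Pth n (pr M x w)}"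
  have sF: "?F \<in> sets M" by (rule defset[OF envH_sets[OF sH] sat_Pth_helper])
  have mem: "pr M i y \<in> ?F \<longleftrightarrow> (\<exists>w. Pth i (pr M y w))" for i y by auto
  have "desc_seq M DA RA ?F"
    unfolding desc_seq_def
  proof (rule conjI; intro allI impI)
    fix i
    obtain y0 where "Pth i y0" using Pth_ex by blast
    then obtain x w where xw: "Pth i (pr M x w)" using Pth_pair by blast
    show "\<exists>!y. pr M i y \<in> ?F"
    proof (rule ex1I[of _ x])
      show "pr M i x \<in> ?F" using xw mem by blast
    next
      fix y assume "pr M i y \<in> ?F"
      then obtain w' where "Pth i (pr M y w')" using mem by blast
      then have "pr M y w' = pr M x w" using Pth_uniq xw by blast
      then show "y = x" by simp
    qed
  next
    fix i y y' assume a: "pr M i y \<in> ?F \<and> pr M (i \<oplus> O1) y' \<in> ?F"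
    then obtain w w' where "Pth i (pr M y w)" "Pth (i \<oplus> O1) (pr M y' w')" using mem by blast
    then have "pr M y' y \<in> RA" using Pth_step by blast
    then show "y \<in> DA \<and> y' \<in> DA \<and> pr M y' y \<in> RA" using loA_parts(1) by blast
  qed
  then show "\<exists>F\<in>sets M. desc_seq M DA RA F" using sF by blast
next
  let ?F = "{a. \<exists>n x w. a = pr M n w \<and> Pth n (pr M x w)}"
  have sF: "?F \<in> sets M" by (rule defset[OF envH_sets[OF sH] sat_Pth_helper2])
  have mem: "pr M i y \<in> ?F \<longleftrightarrow> (\<exists>x. Pth i (pr M x y))" for i y by auto
  have "desc_seq M DB RB ?F"
    unfolding desc_seq_def
  proof (rule conjI; intro allI impI)
    fix i
    obtain y0 where "Pth i y0" using Pth_ex by blast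
    then obtain x w where xw: "Pth i (pr M x w)" using Pth_pair by blast
    show "\<exists>!y. pr M i y \<in> ?F"
    proof (rule ex1I[of _ w])
      show "pr M i w \<in> ?F" using xw mem by blast
    next
      fix y assume "pr M i y \<in> ?F"
      then obtain x' where "Pth i (pr M x' y)" using mem by blast
      then have "pr M x' y = pr M x w" using Pth_uniq xw by blast
      then show "y = w" by simp
    qed
  next
    fix i y y' assume a: "pr M i y \<in> ?F \<and> pr M (i \<oplus> O1) y' \<in> ?F"
    then obtain x x' where "Pth i (pr M x y)" "Pth (i \<oplus> O1) (pr M x' y')" using mem by blast
    then have "pr M y' y \<in> RB" using Pth_step by blast
    then show "y \<in> DB \<and> y' \<in> DB \<and> pr M y' y \<in> RB" using loB_parts(1) by blast
  qed
  then show "\<exists>F\<in>sets M. desc_seq M DB RB F" using sF by blast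
qed

end


definition UaF :: "trm \<Rightarrow> trm \<Rightarrow> afm" where
  "UaF ta tx = Conj (In tx 0) (Or (Equ tx ta) (In (PRt ta tx) 1))"

definition GPrefF :: "nat \<Rightarrow> trm \<Rightarrow> trm \<Rightarrow> trm \<Rightarrow> afm" where
  "GPrefF b ta tc tn = Conj (lenF (b+20) tc tn)
   (Conj (AllN (b+1) (Imp (Less (Var (b+1)) tn) (ExN (b+2) (decF (b+20) tc (Var (b+1)) (Var (b+2))))))
   (Conj (AllN (b+1) (AllN (b+2) (AllN (b+3) (Imp (Conj (decF (b+20) tc (Var (b+1)) (Var (b+2))) (decF (b+20) tc (Var (b+1)) (Var (b+3)))) (Equ (Var (b+2)) (Var (b+3)))))))
   (Conj (AllN (b+1) (AllN (b+2) (Imp (decF (b+20) tc (Var (b+1)) (Var (b+2))) (ExN (b+3) (ExN (b+4) (Conj (Equ (Var (b+2)) (PRt (Var (b+3)) (Var (b+4)))) (In (PRt (Var (b+1)) (Var (b+4))) 6)))))))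
   (Conj (AllN (b+1) (AllN (b+2) (Imp (decF (b+20) tc Zero (PRt (Var (b+1)) (Var (b+2)))) (Conj (UaF ta (Var (b+1))) (AllN (b+3) (Imp (UaF ta (Var (b+3))) (Leq (Var (b+1)) (Var (b+3)))))))))
   (AllN (b+1) (AllN (b+2) (AllN (b+3) (AllN (b+4) (AllN (b+5) (Imp (Conj (decF (b+20) tc (Var (b+1)) (PRt (Var (b+2)) (Var (b+3)))) (decF (b+20) tc (Add (Var (b+1)) One) (PRt (Var (b+4)) (Var (b+5)))))
      (Conj (UaF ta (Var (b+4))) (Conj (In (PRt (Var (b+4)) (Var (b+2))) 1) (AllN (b+6) (Imp (Conj (UaF ta (Var (b+6))) (In (PRt (Var (b+6)) (Var (b+2))) 1)) (Leq (Var (b+4)) (Var (b+6)))))))))))))))))"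

definition GFullF :: "nat \<Rightarrow> trm \<Rightarrow> trm \<Rightarrow> afm" where
  "GFullF b ta tc = ExN (b+40) (Conj (GPrefF (b+40) ta tc (Add (Var (b+40)) One))
     (AllN (b+41) (AllN (b+42) (Imp (decF (b+60) tc (Var (b+40)) (PRt (Var (b+41)) (Var (b+42)))) (Equ (Var (b+41)) ta)))))"

locale aca4G = aca4 +
  fixes Fg :: "nat set"
  assumes sFg: "Fg \<in> sets M" and dg: "desc_seq M DB RB Fg"
begin

definition Ua :: "nat \<Rightarrow> nat \<Rightarrow> bool" where
  "Ua a x \<longleftrightarrow> x \<in> DA \<and> (x = a \<or> pr M a x \<in> RA)"

definition GPref :: "nat \<Rightarrow> nat \<Rightarrow> nat \<Rightarrow> bool" where
  "GPref a c n \<longleftrightarrow> len c n \<and> (\<forall>j. j \<prec> n \<longrightarrow> (\<exists>y. dec c j y))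
   \<and> (\<forall>j y y'. dec c j y \<and> dec c j y' \<longrightarrow> y = y')
   \<and> (\<forall>j y. dec c j y \<longrightarrow> (\<exists>x w. y = pr M x w \<and> pr M j w \<in> Fg))
   \<and> (\<forall>x w. dec c Z (pr M x w) \<longrightarrow> Ua a x \<and> (\<forall>z. Ua a z \<longrightarrow> x \<preceq> z))
   \<and> (\<forall>j x w x' w'. dec c j (pr M x w) \<and> dec c (j \<oplus> O1) (pr M x' w') \<longrightarrow>
        Ua a x' \<and> pr M x' x \<in> RA \<and> (\<forall>z. Ua a z \<and> pr M z x \<in> RA \<longrightarrow> x' \<preceq> z))"

definition GFull :: "nat \<Rightarrow> nat \<Rightarrow> bool" where
  "GFull a c \<longleftrightarrow> (\<exists>n. GPref a c (n \<oplus> O1) \<and> (\<forall>x w. dec c n (pr M x w) \<longrightarrow> x = a))"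

lemma sat_UaF[simp]: "E 0 = DA \<Longrightarrow> E 1 = RA \<Longrightarrow> sat M e E (UaF ta tx) \<longleftrightarrow> Ua (ev M e ta) (ev M e tx)"
  by (auto simp: UaF_def Ua_def)

lemma sat_GPrefF[simp]:
  assumes "E 0 = DA" "E 1 = RA" "E 6 = Fg" "below (b+1) ta" "below (b+1) tc" "below (b+1) tn"
  shows "sat M e E (GPrefF b ta tc tn) \<longleftrightarrow> GPref (ev M e ta) (ev M e tc) (ev M e tn)"
proof -
  have [simp]: "below (b+20) ta" "below (b+20) tc" "below (b+20) tn" using assms below_mono by fastforce+
  have [simp]: "\<And>v. b < v \<Longrightarrow> v \<notin> tvars ta" "\<And>v. b < v \<Longrightarrow> v \<notin> tvars tc" "\<And>v. b < v \<Longrightarrow> v \<notin> tvars tn"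
    using assms below_notin by fastforce+
  show ?thesis using assms(1-3) by (simp add: GPrefF_def GPref_def)
qed

lemma sat_GFullF[simp]:
  assumes "E 0 = DA" "E 1 = RA" "E 6 = Fg" "below (b+1) ta" "below (b+1) tc"
  shows "sat M e E (GFullF b ta tc) \<longleftrightarrow> GFull (ev M e ta) (ev M e tc)"
proof -
  have b1: "below (b+40+1) ta" "below (b+40+1) tc" "below (b+40+1) (Add (Var (b+40)) One)"
    using assms below_mono by fastforce+
  have b2: "below (b+60) ta" "below (b+60) tc" using assms below_mono by fastforce+
  have [simp]: "\<And>v. b < v \<Longrightarrow> v \<notin> tvars ta" "\<And>v. b < v \<Longrightarrow> v \<notin> tvars tc"
    using assms below_notin by fastforce+
  have g: "sat M e' E (GPrefF (b+40) ta tc (Add (Var (b+40)) One)) \<longleftrightarrow> GPref (ev M e' ta) (ev M e' tc) (e' (b+40) \<oplus> O1)" for e'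
    using sat_GPrefF[OF assms(1-3) b1] by simp
  show ?thesis unfolding GFullF_def GFull_def using b2 by (simp add: g)
qed

end

context aca4G begin

definition gv :: "nat \<Rightarrow> nat" where "gv j = (THE w. pr M j w \<in> Fg)"

lemma gvF: "pr M j (gv j) \<in> Fg" and gv_uniq: "pr M j w \<in> Fg \<Longrightarrow> w = gv j"
proof -
  have "\<exists>!w. pr M j w \<in> Fg" using dg unfolding desc_seq_def by blast
  then show "pr M j (gv j) \<in> Fg" unfolding gv_def by (rule theI')
  then show "pr M j w \<in> Fg \<Longrightarrow> w = gv j" using \<open>\<exists>!w. pr M j w \<in> Fg\<close> by blast
qed

lemma gv_DB: "gv j \<in> DB" and gv_step: "pr M (gv (j \<oplus> O1)) (gv j) \<in> RB"
  using dg gvF[of j] gvF[of "j \<oplus> O1"] unfolding desc_seq_def by blast+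

lemma less_one: "i \<prec> O1 \<longleftrightarrow> i = Z"
  using less_suc_iff[of i Z] le_zero_iff by simp

lemma Ua_a: "a \<in> DA \<Longrightarrow> Ua a a" by (simp add: Ua_def)
lemma Ua_D: "Ua a x \<Longrightarrow> x \<in> DA" by (simp add: Ua_def)
lemma Ua_trans: "pr M a a' \<in> RA \<Longrightarrow> Ua a' x \<Longrightarrow> Ua a x"
  unfolding Ua_def using loA_parts(3) by blast
lemma Ua_ne: "Ua a x \<Longrightarrow> x \<noteq> a \<Longrightarrow> pr M a x \<in> RA" by (simp add: Ua_def)
lemma Ua_below: "Ua a x \<Longrightarrow> pr M x a \<in> RA \<Longrightarrow> False"
  unfolding Ua_def using loA_parts(2,3) by blast

lemma GP_parts:
  assumes "GPref a c n"
  shows "len c n" "\<And>j. j \<prec> n \<Longrightarrow> \<exists>y. dec c j y"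
    "\<And>j y y'. dec c j y \<Longrightarrow> dec c j y' \<Longrightarrow> y = y'"
    "\<And>j y. dec c j y \<Longrightarrow> \<exists>x. y = pr M x (gv j)"
    "\<And>x w z. dec c Z (pr M x w) \<Longrightarrow> Ua a x \<and> (Ua a z \<longrightarrow> x \<preceq> z)"
    "\<And>j x w x' w' z. dec c j (pr M x w) \<Longrightarrow> dec c (j \<oplus> O1) (pr M x' w') \<Longrightarrow>
        Ua a x' \<and> pr M x' x \<in> RA \<and> (Ua a z \<and> pr M z x \<in> RA \<longrightarrow> x' \<preceq> z)"
  using assms unfolding GPref_def using gv_uniq by blast+

lemma GP_entry: "GPref a c n \<Longrightarrow> j \<prec> n \<Longrightarrow> \<exists>x. dec c j (pr M x (gv j))"
  using GP_parts(2,4) by metis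

lemma GP_Ua: "GPref a c n \<Longrightarrow> dec c j (pr M x w) \<Longrightarrow> Ua a x"
proof -
  assume g: "GPref a c n" and d: "dec c j (pr M x w)"
  show "Ua a x"
  proof (cases "j = Z")
    case True then show ?thesis using GP_parts(5)[OF g] d by blast
  next
    case False
    then obtain j0 where j0: "j = j0 \<oplus> O1" using zero_or_suc by blast
    have "j \<prec> n" using d GP_parts(1)[OF g] dec_len2 by blast
    then have "j0 \<prec> n" using j0 less_suc_self less_trans by blast
    then obtain x0 where "dec c j0 (pr M x0 (gv j0))" using GP_entry[OF g] by blast
    then show ?thesis using GP_parts(6)[OF g] d j0 by blast
  qed
qed

lemma GP_le_a: "GPref a c n \<Longrightarrow> dec c j (pr M x w) \<Longrightarrow> x \<preceq> a"
proof -
  assume g: "GPref a c n" and d: "dec c j (pr M x w)"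
  have aD: "a \<in> DA" using GP_Ua[OF g d] Ua_D loA_parts(1) unfolding Ua_def by blast
  show "x \<preceq> a"
  proof (cases "j = Z")
    case True then show ?thesis using GP_parts(5)[OF g] d Ua_a[OF aD] by blast
  next
    case False
    then obtain j0 where j0: "j = j0 \<oplus> O1" using zero_or_suc by blast
    have "j \<prec> n" using d GP_parts(1)[OF g] dec_len2 by blast
    then have "j0 \<prec> n" using j0 less_suc_self less_trans by blast
    then obtain x0 where d0: "dec c j0 (pr M x0 (gv j0))" using GP_entry[OF g] by blast
    have st: "Ua a x \<and> pr M x x0 \<in> RA \<and> (Ua a a \<and> pr M a x0 \<in> RA \<longrightarrow> x \<preceq> a)"
      using GP_parts(6)[OF g d0] d j0 by blast
    have "x0 \<noteq> a" using st Ua_below by blast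
    then have "pr M a x0 \<in> RA" using Ua_ne GP_Ua[OF g d0] by blast
    then show ?thesis using st Ua_a[OF aD] by blast
  qed
qed

lemma GP_ge_j: "GPref a c n \<Longrightarrow> dec c j (pr M x w) \<Longrightarrow> j \<preceq> x"
proof -
  assume g: "GPref a c n"
  have "\<forall>j. \<forall>x w. dec c j (pr M x w) \<longrightarrow> j \<preceq> x"
  proof (rule ind[where e="\<lambda>_. c" and
        p="AllN 3 (AllN 4 (Imp (decF 10 (Var 1) (Var 0) (PRt (Var 3) (Var 4))) (Leq (Var 0) (Var 3))))"])
    fix j assume IH: "\<forall>x w. dec c j (pr M x w) \<longrightarrow> j \<preceq> x"
    show "\<forall>x w. dec c (j \<oplus> O1) (pr M x w) \<longrightarrow> j \<oplus> O1 \<preceq> x"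
    proof (intro allI impI)
      fix x' w' assume d': "dec c (j \<oplus> O1) (pr M x' w')"
      have "j \<oplus> O1 \<prec> n" using d' GP_parts(1)[OF g] dec_len2 by blast
      then have "j \<prec> n" using less_suc_self less_trans by blast
      then obtain x where d: "dec c j (pr M x (gv j))" using GP_entry[OF g] by blast
      have jx: "j \<preceq> x" using IH d by blast
      have st: "Ua a x' \<and> pr M x' x \<in> RA" using GP_parts(6)[OF g d d'] by blast
      have "x \<preceq> x'"
      proof (cases "j = Z")
        case True then show ?thesis using GP_parts(5)[OF g] d st by blast
      next
        case False
        then obtain j0 where j0: "j = j0 \<oplus> O1" using zero_or_suc by blast
        then have "j0 \<prec> n" using \<open>j \<prec> n\<close> less_suc_self less_trans by blast
        then obtain x0 where d0: "dec c j0 (pr M x0 (gv j0))" using GP_entry[OF g] by blast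
        have "pr M x x0 \<in> RA" using GP_parts(6)[OF g d0] d j0 by blast
        then have "pr M x' x0 \<in> RA" using st loA_parts(3) by blast
        then show ?thesis using GP_parts(6)[OF g d0] d j0 st by blast
      qed
      moreover have "x \<noteq> x'" using st loA_parts(2) by blast
      ultimately have "x \<prec> x'" by blast
      then have "j \<prec> x'" using jx L.le_less_trans by blast
      then show "j \<oplus> O1 \<preceq> x'" using suc_le_iff by blast
    qed
  qed (simp_all add: zero_le)
  then show "dec c j (pr M x w) \<Longrightarrow> j \<preceq> x" by blast
qed

end

context aca4G begin

lemma dec_char:
  assumes "len c n" "\<forall>i y. i \<prec> n \<longrightarrow> (dec c i y \<longleftrightarrow> Q i y)"
  shows "dec c i y \<longleftrightarrow> i \<prec> n \<and> Q i y"
  using assms dec_len2 by blast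

lemma GP_base:
  assumes aD: "a \<in> DA"
  shows "\<exists>c. GPref a c O1"
proof -
  have "\<exists>x0. Ua a x0 \<and> (\<forall>z. Ua a z \<longrightarrow> x0 \<preceq> z)"
    by (rule lnp[where E="envH Fg" and e="\<lambda>_. a" and v=0 and p="UaF (Var 1) (Var 0)" and x=a])
       (use envH_sets[OF sFg] Ua_a[OF aD] in \<open>simp_all add: envH_def\<close>)
  then obtain x0 where x0: "Ua a x0" "\<And>z. Ua a z \<Longrightarrow> x0 \<preceq> z" by blast
  let ?Y = "{q. q = pr M Z (pr M x0 (gv Z))}"
  have sY: "?Y \<in> sets M"
    by (rule defset[where E=E0 and e="\<lambda>i. if i = 1 then x0 else gv Z" and v=0 and
         p="Equ (Var 0) (PRt Zero (PRt (Var 1) (Var 2)))"]) simp_all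
  have "\<exists>!y. pr M i y \<in> ?Y" if "i \<prec> O1" for i using that by (simp add: less_one)
  then obtain c where lc: "len c O1" and dc: "\<forall>i y. i \<prec> O1 \<longrightarrow> (dec c i y \<longleftrightarrow> pr M i y \<in> ?Y)"
    using seq_exists[OF sY] by blast
  have D: "dec c i y \<longleftrightarrow> i = Z \<and> y = pr M x0 (gv Z)" for i y
    using dec_char[OF lc dc] by (simp add: less_one)
  have "GPref a c O1"
    unfolding GPref_def
  proof (intro conjI allI impI)
    show "len c O1" by (rule lc)
  next
    fix j assume "j \<prec> O1" then have "j = Z" using less_one by blast
    then show "\<exists>y. dec c j y" using D by simp
  next
    fix j y y' assume "dec c j y \<and> dec c j y'" then show "y = y'" by (simp add: D)
  next
    fix j y assume "dec c j y"
    then have "j = Z" "y = pr M x0 (gv Z)" using D by simp_all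
    then show "\<exists>x w. y = pr M x w \<and> pr M j w \<in> Fg" using gvF by blast
  next
    fix x w assume "dec c Z (pr M x w)" then have "x = x0" using D by simp
    then show "Ua a x" using x0 by simp
  next
    fix x w z assume "dec c Z (pr M x w)" "Ua a z"
    then have "x = x0" using D by simp
    then show "x \<preceq> z" using x0 \<open>Ua a z\<close> by blast
  next
    fix j x w x' w' assume "dec c j (pr M x w) \<and> dec c (j \<oplus> O1) (pr M x' w')"
    then show "Ua a x'" using D by simp
  next
    fix j x w x' w' assume "dec c j (pr M x w) \<and> dec c (j \<oplus> O1) (pr M x' w')"
    then show "pr M x' x \<in> RA" using D by simp
  next
    fix j x w x' w' z assume "dec c j (pr M x w) \<and> dec c (j \<oplus> O1) (pr M x' w')"
    then show "x' \<preceq> z" using D by simp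
  qed
  then show ?thesis by blast
qed

lemma GP_ext:
  assumes g: "GPref a c (j \<oplus> O1)" and dj: "dec c j (pr M xj (gv j))" and ne: "xj \<noteq> a"
  shows "\<exists>c'. GPref a c' (j \<oplus> O1 \<oplus> O1)"
proof -
  have uj: "Ua a xj" using GP_Ua[OF g dj] .
  have aD: "a \<in> DA" using uj unfolding Ua_def using loA_parts(1) by blast
  have a_in: "pr M a xj \<in> RA" using Ua_ne[OF uj ne] .
  have "\<exists>xs. (Ua a xs \<and> pr M xs xj \<in> RA) \<and> (\<forall>z. Ua a z \<and> pr M z xj \<in> RA \<longrightarrow> xs \<preceq> z)"
    by (rule lnp[where E="envH Fg" and e="\<lambda>i. if i = 1 then a else xj" and v=0
          and p="Conj (UaF (Var 1) (Var 0)) (In (PRt (Var 0) (Var 2)) 1)" and x=a])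
       (use envH_sets[OF sFg] Ua_a[OF aD] a_in in \<open>simp_all add: envH_def\<close>)
  then obtain xs where xs: "Ua a xs" "pr M xs xj \<in> RA" "\<And>z. Ua a z \<and> pr M z xj \<in> RA \<Longrightarrow> xs \<preceq> z" by blast
  define j1 where "j1 = j \<oplus> O1"
  define ys where "ys = pr M xs (gv j1)"
  have lc: "len c j1" using GP_parts(1)[OF g] j1_def by simp
  have cj1: "dec c i y \<Longrightarrow> i \<prec> j1" for i y using dec_len2 lc by blast
  let ?Q = "\<lambda>i y. (i \<prec> j1 \<and> dec c i y) \<or> (i = j1 \<and> y = ys)"
  let ?Y = "{q. \<exists>i y. q = pr M i y \<and> ?Q i y}"
  have sY: "?Y \<in> sets M"
    by (rule defset[where E=E0 and e="\<lambda>i. if i = 3 then j1 else if i = 4 then c else ys" and v=0 and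
         p="ExN 1 (ExN 2 (Conj (Equ (Var 0) (PRt (Var 1) (Var 2))) (Or (Conj (Less (Var 1) (Var 3)) (decF 10 (Var 4) (Var 1) (Var 2))) (Conj (Equ (Var 1) (Var 3)) (Equ (Var 2) (Var 5))))))"])
       simp_all
  have memY: "pr M i y \<in> ?Y \<longleftrightarrow> ?Q i y" for i y by simp
  have ex1: "\<exists>!y. pr M i y \<in> ?Y" if i: "i \<prec> j1 \<oplus> O1" for i
  proof -
    have "i \<prec> j1 \<or> i = j1" using i by (simp add: ax)
    then show ?thesis
    proof
      assume ij: "i \<prec> j1"
      then obtain y where y: "dec c i y" using GP_parts(2)[OF g] j1_def by blast
      show ?thesis
      proof (rule ex1I[of _ y])
        show "pr M i y \<in> ?Y" using memY ij y by blast
      next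
        fix y' assume "pr M i y' \<in> ?Y"
        then have "?Q i y'" using memY by blast
        then have "dec c i y'" using ij by auto
        then show "y' = y" using y GP_parts(3)[OF g] by blast
      qed
    next
      assume ij: "i = j1"
      show ?thesis
      proof (rule ex1I[of _ ys])
        show "pr M i ys \<in> ?Y" using memY ij by blast
      next
        fix y' assume "pr M i y' \<in> ?Y"
        then have "?Q i y'" using memY by blast
        then show "y' = ys" using ij by auto
      qed
    qed
  qed
  obtain c' where lc': "len c' (j1 \<oplus> O1)" and dc': "\<forall>i y. i \<prec> j1 \<oplus> O1 \<longrightarrow> (dec c' i y \<longleftrightarrow> pr M i y \<in> ?Y)"
    using seq_exists[OF sY ex1] by blast
  have D0: "dec c' i y \<longleftrightarrow> i \<prec> j1 \<oplus> O1 \<and> pr M i y \<in> ?Y" for i y using dec_char[OF lc' dc'] .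
  have D: "dec c' i y \<longleftrightarrow> dec c i y \<or> (i = j1 \<and> y = ys)" for i y
  proof
    assume "dec c' i y"
    then have "?Q i y" using D0 memY by blast
    then show "dec c i y \<or> (i = j1 \<and> y = ys)" by blast
  next
    assume h: "dec c i y \<or> (i = j1 \<and> y = ys)"
    then have "?Q i y" using cj1 by blast
    moreover have "i \<prec> j1 \<oplus> O1" using h cj1 less_suc_self less_trans by blast
    ultimately show "dec c' i y" using D0 memY by blast
  qed
  have nj1: "\<not> dec c j1 y" for y using cj1 less_irrefl by blast
  have entry_old: "dec c i y" if "dec c' i y" "i \<noteq> j1" for i y using that D by blast
  have "GPref a c' (j1 \<oplus> O1)"
    unfolding GPref_def
  proof (intro conjI allI impI)
    show "len c' (j1 \<oplus> O1)" by (rule lc')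
  next
    fix i assume "i \<prec> j1 \<oplus> O1"
    then show "\<exists>y. dec c' i y" using ex1 dc' by blast
  next
    fix i y y' assume h: "dec c' i y \<and> dec c' i y'"
    show "y = y'"
    proof (cases "i = j1")
      case True then show ?thesis using h D nj1 by blast
    next
      case False then show ?thesis using h entry_old GP_parts(3)[OF g] by blast
    qed
  next
    fix i y assume h: "dec c' i y"
    show "\<exists>x w. y = pr M x w \<and> pr M i w \<in> Fg"
    proof (cases "i = j1")
      case True then have "y = ys" using h D nj1 by blast
      then show ?thesis using True gvF ys_def by blast
    next
      case False then show ?thesis using h entry_old GP_parts(4)[OF g] gvF by blast
    qed
  next
    fix x w assume "dec c' Z (pr M x w)"
    moreover have "Z \<noteq> j1" using j1_def ax(1) by metis
    ultimately have "dec c Z (pr M x w)" using entry_old by blast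
    then show "Ua a x" using GP_parts(5)[OF g] by blast
  next
    fix x w z assume "dec c' Z (pr M x w)" "Ua a z"
    moreover have "Z \<noteq> j1" using j1_def ax(1) by metis
    ultimately have "dec c Z (pr M x w)" using entry_old by blast
    then show "x \<preceq> z" using GP_parts(5)[OF g] \<open>Ua a z\<close> by blast
  next
    fix i x w x' w'
    assume h: "dec c' i (pr M x w) \<and> dec c' (i \<oplus> O1) (pr M x' w')"
    have "(Ua a x' \<and> pr M x' x \<in> RA) \<and> (\<forall>z. Ua a z \<and> pr M z x \<in> RA \<longrightarrow> x' \<preceq> z)"
    proof (cases "i \<oplus> O1 = j1")
      case True
      then have ij: "i = j" using ax(2) j1_def by blast
      have "pr M x' w' = ys" using h D nj1 True by blast
      then have "x' = xs" using ys_def by simp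
      moreover have "i \<noteq> j1" using ij j1_def less_suc_self less_irrefl by metis
      then have "dec c j (pr M x w)" using h entry_old ij by blast
      then have "pr M x w = pr M xj (gv j)" using dj GP_parts(3)[OF g] by blast
      then have "x = xj" by simp
      ultimately show ?thesis using xs by blast
    next
      case False
      then have d2: "dec c (i \<oplus> O1) (pr M x' w')" using h entry_old by blast
      have "i \<noteq> j1"
      proof
        assume "i = j1"
        then have "j1 \<oplus> O1 \<prec> j1" using d2 cj1 by blast
        then show False using less_suc_self less_asym by blast
      qed
      then have d1: "dec c i (pr M x w)" using h entry_old by blast
      show ?thesis using GP_parts(6)[OF g d1 d2] by blast
    qed
    then show "Ua a x'" "pr M x' x \<in> RA" by blast+
  next
    fix i x w x' w' z
    assume h: "dec c' i (pr M x w) \<and> dec c' (i \<oplus> O1) (pr M x' w')" and hz: "Ua a z \<and> pr M z x \<in> RA"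
    show "x' \<preceq> z"
    proof (cases "i \<oplus> O1 = j1")
      case True
      then have ij: "i = j" using ax(2) j1_def by blast
      have "pr M x' w' = ys" using h D nj1 True by blast
      then have "x' = xs" using ys_def by simp
      moreover have "i \<noteq> j1" using ij j1_def less_suc_self less_irrefl by metis
      then have "dec c j (pr M x w)" using h entry_old ij by blast
      then have "pr M x w = pr M xj (gv j)" using dj GP_parts(3)[OF g] by blast
      then have "x = xj" by simp
      ultimately show ?thesis using xs hz by blast
    next
      case False
      then have d2: "dec c (i \<oplus> O1) (pr M x' w')" using h entry_old by blast
      have "i \<noteq> j1"
      proof
        assume "i = j1"
        then have "j1 \<oplus> O1 \<prec> j1" using d2 cj1 by blast
        then show False using less_suc_self less_asym by blast
      qed
      then have d1: "dec c i (pr M x w)" using h entry_old by blast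
      show ?thesis using GP_parts(6)[OF g d1 d2] hz by blast
    qed
  qed
  then show ?thesis using j1_def by blast
qed

lemma GFull_ex:
  assumes aD: "a \<in> DA"
  shows "\<exists>c. GFull a c"
proof -
  have "\<forall>j. (\<exists>c. GPref a c (j \<oplus> O1)) \<or> (\<exists>c. GFull a c)"
  proof (rule indE[where E="envH Fg" and e="\<lambda>_. a" and v=0 and
        p="Or (ExN 1 (GPrefF 10 (Var 2) (Var 1) (Add (Var 0) One))) (ExN 1 (GFullF 10 (Var 2) (Var 1)))"])
    show "(\<exists>c. GPref a c (Z \<oplus> O1)) \<or> (\<exists>c. GFull a c)" using GP_base[OF aD] by simp
  next
    fix j assume IH: "(\<exists>c. GPref a c (j \<oplus> O1)) \<or> (\<exists>c. GFull a c)"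
    show "(\<exists>c. GPref a c (j \<oplus> O1 \<oplus> O1)) \<or> (\<exists>c. GFull a c)"
    proof (cases "\<exists>c. GFull a c")
      case False
      then obtain c where g: "GPref a c (j \<oplus> O1)" using IH by blast
      obtain xj where dj: "dec c j (pr M xj (gv j))" using GP_entry[OF g] less_suc_self by blast
      show ?thesis
      proof (cases "xj = a")
        case True
        have "\<forall>x w. dec c j (pr M x w) \<longrightarrow> x = a"
        proof (intro allI impI)
          fix x w assume "dec c j (pr M x w)"
          then have "pr M x w = pr M xj (gv j)" using dj GP_parts(3)[OF g] by blast
          then show "x = a" using True by simp
        qed
        then have "GFull a c" unfolding GFull_def using g by blast
        then show ?thesis by blast
      next
        case False then show ?thesis using GP_ext[OF g dj] by blast
      qed
    qed blast
  qed (rule envH_sets[OF sFg], simp add: envH_def)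
  then have "(\<exists>c. GPref a c (a \<oplus> O1 \<oplus> O1)) \<or> (\<exists>c. GFull a c)" by blast
  then show ?thesis
  proof
    assume "\<exists>c. GPref a c (a \<oplus> O1 \<oplus> O1)"
    then obtain c where g: "GPref a c (a \<oplus> O1 \<oplus> O1)" by blast
    obtain x where d: "dec c (a \<oplus> O1) (pr M x (gv (a \<oplus> O1)))" using GP_entry[OF g] less_suc_self by blast
    have "a \<oplus> O1 \<preceq> x" using GP_ge_j[OF g d] .
    moreover have "x \<preceq> a" using GP_le_a[OF g d] .
    ultimately have "a \<oplus> O1 \<preceq> a" using L.order_trans by blast
    then show ?thesis using suc_le_iff less_irrefl by blast
  qed
qed

end

context aca4G begin

lemma GPref_same: "GPref a c n \<Longrightarrow> same c c' \<Longrightarrow> GPref a c' n"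
proof -
  assume g: "GPref a c n" and s: "same c c'"
  have deq: "dec c' i y = dec c i y" for i y using s unfolding same_def by blast
  have "len c' n" using s GP_parts(1)[OF g] len_unique unfolding same_def by metis
  then show ?thesis using g unfolding GPref_def deq by blast
qed

lemma GFull_same: "GFull a c \<Longrightarrow> same c c' \<Longrightarrow> GFull a c'"
proof -
  assume g: "GFull a c" and s: "same c c'"
  have deq: "dec c' i y = dec c i y" for i y using s unfolding same_def by blast
  show ?thesis using g GPref_same[OF _ s] unfolding GFull_def deq by blast
qed

lemma GF_parts: "GFull a c \<Longrightarrow> \<exists>m. GPref a c (m \<oplus> O1) \<and> dec c m (pr M a (gv m))"
proof -
  assume "GFull a c"
  then obtain m where g: "GPref a c (m \<oplus> O1)" and l: "\<forall>x w. dec c m (pr M x w) \<longrightarrow> x = a"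
    unfolding GFull_def by blast
  obtain x where "dec c m (pr M x (gv m))" using GP_entry[OF g] less_suc_self by blast
  moreover then have "x = a" using l by blast
  ultimately show ?thesis using g by blast
qed

lemma GFull_uniq:
  assumes g1: "GFull a c" and g2: "GFull a c'"
  shows "same c c'"
proof -
  obtain m where gc: "GPref a c (m \<oplus> O1)" and lastc: "dec c m (pr M a (gv m))" using GF_parts[OF g1] by blast
  obtain m' where gc': "GPref a c' (m' \<oplus> O1)" and lastc': "dec c' m' (pr M a (gv m'))" using GF_parts[OF g2] by blast
  let ?n = "m \<oplus> O1" and ?n' = "m' \<oplus> O1"
  have Q: "\<forall>j. \<forall>y. (j \<prec> ?n \<and> j \<prec> ?n') \<longrightarrow> (dec c j y \<longleftrightarrow> dec c' j y)"
  proof (rule ind[where e="\<lambda>i. if i = 1 then c else if i = 2 then c' else if i = 3 then ?n else ?n'" and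
      p="AllN 5 (Imp (Conj (Less (Var 0) (Var 3)) (Less (Var 0) (Var 4))) (Iff (decF 10 (Var 1) (Var 0) (Var 5)) (decF 10 (Var 2) (Var 0) (Var 5))))"])
    show "\<forall>y. (Z \<prec> ?n \<and> Z \<prec> ?n') \<longrightarrow> (dec c Z y \<longleftrightarrow> dec c' Z y)"
    proof (intro allI impI)
      fix y assume "Z \<prec> ?n \<and> Z \<prec> ?n'"
      then obtain x x' where d: "dec c Z (pr M x (gv Z))" and d': "dec c' Z (pr M x' (gv Z))"
        using GP_entry[OF gc] GP_entry[OF gc'] by blast
      have "x \<preceq> x'" using GP_parts(5)[OF gc d] GP_parts(5)[OF gc' d'] by blast
      moreover have "x' \<preceq> x" using GP_parts(5)[OF gc d] GP_parts(5)[OF gc' d'] by blast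
      ultimately have "x = x'" using less_asym by blast
      then show "dec c Z y \<longleftrightarrow> dec c' Z y" using d d' GP_parts(3)[OF gc] GP_parts(3)[OF gc'] by metis
    qed
  next
    fix j assume IH: "\<forall>y. (j \<prec> ?n \<and> j \<prec> ?n') \<longrightarrow> (dec c j y \<longleftrightarrow> dec c' j y)"
    show "\<forall>y. (j \<oplus> O1 \<prec> ?n \<and> j \<oplus> O1 \<prec> ?n') \<longrightarrow> (dec c (j \<oplus> O1) y \<longleftrightarrow> dec c' (j \<oplus> O1) y)"
    proof (intro allI impI)
      fix y assume h: "j \<oplus> O1 \<prec> ?n \<and> j \<oplus> O1 \<prec> ?n'"
      then have jj: "j \<prec> ?n" "j \<prec> ?n'" using less_suc_self less_trans by blast+
      obtain xj where dj: "dec c j (pr M xj (gv j))" using GP_entry[OF gc jj(1)] by blast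
      then have dj': "dec c' j (pr M xj (gv j))" using IH jj by blast
      obtain x x' where d: "dec c (j \<oplus> O1) (pr M x (gv (j \<oplus> O1)))" and d': "dec c' (j \<oplus> O1) (pr M x' (gv (j \<oplus> O1)))"
        using GP_entry[OF gc] GP_entry[OF gc'] h by blast
      have s1: "Ua a x \<and> pr M x xj \<in> RA" using GP_parts(6)[OF gc dj d] by blast
      have s2: "Ua a x' \<and> pr M x' xj \<in> RA" using GP_parts(6)[OF gc' dj' d'] by blast
      have "x \<preceq> x'" using GP_parts(6)[OF gc dj d] s2 by blast
      moreover have "x' \<preceq> x" using GP_parts(6)[OF gc' dj' d'] s1 by blast
      ultimately have "x = x'" using less_asym by blast
      then show "dec c (j \<oplus> O1) y \<longleftrightarrow> dec c' (j \<oplus> O1) y" using d d' GP_parts(3)[OF gc] GP_parts(3)[OF gc'] by metis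
    qed
  qed simp
  have no_ext: False if ne: "k \<prec> k'" "GPref a d (k \<oplus> O1)" "dec d k (pr M a (gv k))" "GPref a d' (k' \<oplus> O1)"
     "\<forall>y. dec d k y \<longleftrightarrow> dec d' k y" for k k' d d'
  proof -
    have "dec d' k (pr M a (gv k))" using ne(3,5) by blast
    moreover have "k \<oplus> O1 \<prec> k' \<oplus> O1" using ne(1) add_less_mono by blast
    then obtain x'' where "dec d' (k \<oplus> O1) (pr M x'' (gv (k \<oplus> O1)))" using GP_entry[OF ne(4)] by blast
    ultimately have "Ua a x'' \<and> pr M x'' a \<in> RA" using GP_parts(6)[OF ne(4)] by blast
    then show False using Ua_below by blast
  qed
  have "m = m'"
  proof (rule ccontr)
    assume "m \<noteq> m'"
    then consider "m \<prec> m'" | "m' \<prec> m" using trich by blast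
    then show False
    proof cases
      case 1
      have "m \<prec> ?n" "m \<prec> ?n'" using 1 less_suc_self less_trans by blast+
      then show False using no_ext[OF 1 gc lastc gc'] Q by blast
    next
      case 2
      have "m' \<prec> ?n" "m' \<prec> ?n'" using 2 less_suc_self less_trans by blast+
      then show False using no_ext[OF 2 gc' lastc' gc] Q by blast
    qed
  qed
  then show ?thesis unfolding same_def
    using Q GP_parts(1)[OF gc] GP_parts(1)[OF gc'] dec_len2 by metis
qed

end

context aca4G begin

lemma GFull_mono:
  assumes aa: "pr M a a' \<in> RA" and g1: "GFull a c" and g2: "GFull a' c'"
  shows "KB c c'"
proof -
  obtain m where gc: "GPref a c (m \<oplus> O1)" and lastc: "dec c m (pr M a (gv m))" using GF_parts[OF g1] by blast
  obtain m' where gc': "GPref a' c' (m' \<oplus> O1)" and lastc': "dec c' m' (pr M a' (gv m'))" using GF_parts[OF g2] by blast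
  define n where "n = m \<oplus> O1"
  define n' where "n' = m' \<oplus> O1"
  have ln: "len c n" and ln': "len c' n'" using GP_parts(1)[OF gc] GP_parts(1)[OF gc'] n_def n'_def by blast+
  have gc0: "GPref a c n" and gc0': "GPref a' c' n'" using gc gc' n_def n'_def by simp_all
  let ?D = "\<lambda>i. \<not> (i \<prec> n \<and> i \<prec> n' \<and> (\<forall>y. dec c i y \<longleftrightarrow> dec c' i y))"
  have "\<exists>i. ?D i \<and> (\<forall>j. ?D j \<longrightarrow> i \<preceq> j)"
    by (rule lnp[where E=E0 and e="\<lambda>i. if i = 1 then c else if i = 2 then c' else if i = 3 then n else n'" and v=0 and
          p="Neg (Conj (Less (Var 0) (Var 3)) (Conj (Less (Var 0) (Var 4)) (AllN 5 (Iff (decF 10 (Var 1) (Var 0) (Var 5)) (decF 10 (Var 2) (Var 0) (Var 5))))))"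
          and x=n]) simp_all
  then obtain i0 where Di0: "?D i0" and imin: "\<And>j. ?D j \<Longrightarrow> i0 \<preceq> j" by blast
  have agree: "j \<prec> n \<and> j \<prec> n' \<and> (\<forall>y. dec c j y \<longleftrightarrow> dec c' j y)" if "j \<prec> i0" for j
    using imin[of j] that less_asym by blast
  have i0n: "i0 \<preceq> n" and i0n': "i0 \<preceq> n'"
    using agree[of n] agree[of n'] not_less by blast+
  have aD: "a \<in> DA" using aa loA_parts(1) by blast
  have aa_ne: "pr M a' a \<notin> RA" using aa loA_parts(2,3) by blast
  consider (A) "i0 \<prec> n" "i0 \<prec> n'" | (B) "\<not> i0 \<prec> n'" | (C) "i0 \<prec> n'" "\<not> i0 \<prec> n" by blast
  then show ?thesis
  proof cases
    case A
    then have nE: "\<not> (\<forall>y. dec c i0 y \<longleftrightarrow> dec c' i0 y)" using Di0 by blast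
    obtain x where d: "dec c i0 (pr M x (gv i0))" using GP_entry[OF gc0 A(1)] by blast
    obtain x' where d': "dec c' i0 (pr M x' (gv i0))" using GP_entry[OF gc0' A(2)] by blast
    have "x \<noteq> x'"
    proof
      assume "x = x'"
      then have "\<forall>y. dec c i0 y \<longleftrightarrow> dec c' i0 y" using d d' GP_parts(3)[OF gc0] GP_parts(3)[OF gc0'] by metis
      then show False using nE by blast
    qed
    have "x \<preceq> x'"
    proof (cases "i0 = Z")
      case True
      have "Ua a' x'" using GP_parts(5)[OF gc0'] d' True by blast
      then have "Ua a x'" using Ua_trans aa by blast
      then show ?thesis using GP_parts(5)[OF gc0] d True by blast
    next
      case False
      then obtain j where j: "i0 = j \<oplus> O1" using zero_or_suc by blast
      then have jj: "j \<prec> i0" using less_suc_self by blast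
      then have "j \<prec> n" using agree by blast
      then obtain xj where dj: "dec c j (pr M xj (gv j))" using GP_entry[OF gc0] by blast
      then have dj': "dec c' j (pr M xj (gv j))" using agree jj by blast
      have "Ua a' x' \<and> pr M x' xj \<in> RA" using GP_parts(6)[OF gc0' dj'] d' j by blast
      then have "Ua a x' \<and> pr M x' xj \<in> RA" using Ua_trans aa by blast
      then show ?thesis using GP_parts(6)[OF gc0 dj] d j by blast
    qed
    then have "x \<prec> x'" using \<open>x \<noteq> x'\<close> by blast
    then have "pr M x (gv i0) \<prec> pr M x' (gv i0)" by (rule pr_mono1)
    moreover have "\<forall>j z. j \<prec> i0 \<and> dec c' j z \<longrightarrow> dec c j z" using agree by blast
    ultimately show ?thesis unfolding KB_def using d d' by blast
  next
    case B
    then have i0eq: "i0 = n'" using i0n' by blast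
    have mi: "m' \<prec> i0" using i0eq n'_def less_suc_self by blast
    then have lastc_c: "dec c m' (pr M a' (gv m'))" using agree lastc' by blast
    show ?thesis
    proof (cases "i0 \<prec> n")
      case True
      have "\<forall>i y. dec c' i y \<longrightarrow> dec c i y"
      proof (intro allI impI)
        fix i y assume "dec c' i y"
        then have "i \<prec> i0" using dec_len2 ln' i0eq by blast
        then show "dec c i y" using agree \<open>dec c' i y\<close> by blast
      qed
      then show ?thesis unfolding KB_def using ln ln' True i0eq by blast
    next
      case False
      then have "i0 = n" using i0n by blast
      then have "m = m'" using i0eq n_def n'_def ax(2) by metis
      then have "pr M a (gv m) = pr M a' (gv m')" using lastc lastc_c GP_parts(3)[OF gc] by metis
      then have "a = a'" by simp
      then show ?thesis using aa loA_parts(2) by blast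
    qed
  next
    case C
    then have i0eq: "i0 = n" using i0n by blast
    have mi: "m \<prec> i0" using i0eq n_def less_suc_self by blast
    then have lastc_c': "dec c' m (pr M a (gv m))" using agree lastc by blast
    have "m \<oplus> O1 \<prec> n'" using C(1) i0eq n_def by simp
    then obtain x'' where d'': "dec c' (m \<oplus> O1) (pr M x'' (gv (m \<oplus> O1)))" using GP_entry[OF gc0'] by blast
    have "Ua a' x'' \<and> pr M x'' a \<in> RA" using GP_parts(6)[OF gc0' lastc_c' d''] by blast
    then have "pr M a' a \<in> RA" unfolding Ua_def using loA_parts(3) by blast
    then show ?thesis using aa_ne by blast
  qed
qed

lemma emb_ex: "a \<in> DA \<Longrightarrow> \<exists>c. node c \<and> GFull a c"
proof -
  assume aD: "a \<in> DA"
  obtain c0 where "GFull a c0" using GFull_ex[OF aD] by blast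
  have "\<exists>c. GFull a c \<and> (\<forall>c'. GFull a c' \<longrightarrow> c \<preceq> c')"
    by (rule lnp[where E="envH Fg" and e="\<lambda>_. a" and v=0 and p="GFullF 10 (Var 1) (Var 0)" and x=c0])
       (use envH_sets[OF sFg] \<open>GFull a c0\<close> in \<open>simp_all add: envH_def\<close>)
  then obtain c where g: "GFull a c" and cmin: "\<And>c'. GFull a c' \<Longrightarrow> c \<preceq> c'" by blast
  obtain m where gc: "GPref a c (m \<oplus> O1)" using GF_parts[OF g] by blast
  have "valid c"
    unfolding valid_def
  proof (rule exI[of _ "m \<oplus> O1"], intro conjI allI impI)
    show "len c (m \<oplus> O1)" using GP_parts(1)[OF gc] .
  next
    fix i assume "i \<prec> m \<oplus> O1" then show "\<exists>y. dec c i y" using GP_parts(2)[OF gc] by blast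
  next
    fix i y y' assume "dec c i y \<and> dec c i y'" then show "y = y'" using GP_parts(3)[OF gc] by blast
  next
    fix i y assume d: "dec c i y"
    then obtain x where y: "y = pr M x (gv i)" using GP_parts(4)[OF gc] by blast
    then have "x \<in> DA" using GP_Ua[OF gc] d Ua_D by blast
    then show "\<exists>x w. y = pr M x w \<and> x \<in> DA \<and> w \<in> DB" using y gv_DB by blast
  next
    fix i x w x' w' assume h: "dec c i (pr M x w) \<and> dec c (i \<oplus> O1) (pr M x' w')"
    then show "pr M x' x \<in> RA" using GP_parts(6)[OF gc] by blast
  next
    fix i x w x' w' assume h: "dec c i (pr M x w) \<and> dec c (i \<oplus> O1) (pr M x' w')"
    then have "w = gv i" "w' = gv (i \<oplus> O1)" using GP_parts(4)[OF gc] by (metis pr_inj_iff)+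
    then show "pr M w' w \<in> RB" using gv_step by simp
  qed
  moreover have "\<forall>c'. c' \<prec> c \<longrightarrow> \<not> same c' c"
  proof (intro allI impI notI)
    fix c' assume "c' \<prec> c" "same c' c"
    then have "GFull a c'" using GFull_same[OF g] same_sym by blast
    then have "c \<preceq> c'" using cmin by blast
    then show False using \<open>c' \<prec> c\<close> less_asym by blast
  qed
  ultimately show ?thesis using g node_def by blast
qed

lemma embedding_ex: "\<exists>G\<in>sets M. embedding M G DA RA Dd Rd"
proof -
  let ?G = "{q. \<exists>a c. q = pr M a c \<and> a \<in> DA \<and> c \<in> Dd \<and> GFull a c}"
  have sG: "?G \<in> sets M"
    by (rule defset[where E="envH Fg" and e="\<lambda>_. 0" and v=0 and
         p="ExN 1 (ExN 2 (Conj (Equ (Var 0) (PRt (Var 1) (Var 2))) (Conj (In (Var 1) 0) (Conj (In (Var 2) 4) (GFullF 10 (Var 1) (Var 2))))))"])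
       (use envH_sets[OF sFg] in \<open>simp_all add: envH_def\<close>)
  have mem: "pr M a c \<in> ?G \<longleftrightarrow> a \<in> DA \<and> node c \<and> GFull a c" for a c by (simp add: Dd_def)
  have "embedding M ?G DA RA Dd Rd"
    unfolding embedding_def
  proof (intro conjI allI impI ballI)
    fix x assume xD: "x \<in> DA"
    obtain c where c: "node c" "GFull x c" using emb_ex[OF xD] by blast
    show "\<exists>!y. pr M x y \<in> ?G"
    proof (rule ex1I[of _ c])
      show "pr M x c \<in> ?G" using mem xD c by blast
    next
      fix y assume "pr M x y \<in> ?G"
      then have "node y" "GFull x y" using mem by blast+
      then show "y = c" using GFull_uniq c node_eq by blast
    qed
  next
    fix x y assume "pr M x y \<in> ?G" then show "x \<in> DA" using mem by blast
  next
    fix x y assume "pr M x y \<in> ?G" then show "y \<in> Dd" using mem Dd_def by blast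
  next
    fix x x' y y' assume h: "pr M x y \<in> ?G \<and> pr M x' y' \<in> ?G \<and> pr M x x' \<in> RA"
    then have "node y" "node y'" "GFull x y" "GFull x' y'" using mem by blast+
    then show "pr M y y' \<in> Rd" using GFull_mono h Rd_iff by blast
  qed
  then show ?thesis using sG by blast
qed

end


context aca4 begin

lemma main_emb:
  assumes "\<exists>F\<in>sets M. desc_seq M DB RB F"
  shows "\<exists>G\<in>sets M. embedding M G DA RA Dd Rd"
proof -
  obtain F where F: "F \<in> sets M" "desc_seq M DB RB F" using assms by blast
  interpret G: aca4G M DA RA DB RB F
    by (rule aca4G.intro[OF aca4_axioms], unfold_locales) (use F in blast)+
  show ?thesis by (rule G.embedding_ex)
qed

lemma main_noWO:
  assumes "H \<in> sets M" "desc_seq M Dd Rd H"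
  shows "(\<exists>F\<in>sets M. desc_seq M DA RA F) \<and> (\<exists>F\<in>sets M. desc_seq M DB RB F)"
proof -
  interpret HH: aca4H M DA RA DB RB H
    by (rule aca4H.intro[OF aca4_axioms], unfold_locales) (use assms in blast)+
  show ?thesis by (rule HH.no_WO_both)
qed

lemma desc_compose:
  assumes sF: "F \<in> sets M" and dF: "desc_seq M DA RA F" and sG: "G \<in> sets M"
    and eG: "embedding M G DA RA Dd Rd"
  shows "\<exists>H\<in>sets M. desc_seq M Dd Rd H"
proof -
  let ?H = "{q. \<exists>i c. q = pr M i c \<and> (\<exists>a. pr M i a \<in> F \<and> pr M a c \<in> G)}"
  have sH: "?H \<in> sets M"
    by (rule defset[where E="\<lambda>i. if i = 0 then F else G" and e="\<lambda>_. 0" and v=0 and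
         p="ExN 1 (ExN 2 (Conj (Equ (Var 0) (PRt (Var 1) (Var 2))) (ExN 3 (Conj (In (PRt (Var 1) (Var 3)) 0) (In (PRt (Var 3) (Var 2)) 1)))))"])
       (use sF sG in simp_all)
  have mem: "pr M i c \<in> ?H \<longleftrightarrow> (\<exists>a. pr M i a \<in> F \<and> pr M a c \<in> G)" for i c by simp
  have Fu: "\<exists>!a. pr M i a \<in> F" for i using dF unfolding desc_seq_def by blast
  have FD: "pr M i a \<in> F \<Longrightarrow> a \<in> DA" for i a
  proof -
    assume h: "pr M i a \<in> F"
    obtain a' where "pr M (i \<oplus> O1) a' \<in> F" using Fu by blast
    then show "a \<in> DA" using dF h unfolding desc_seq_def by blast
  qed
  have Gu: "a \<in> DA \<Longrightarrow> \<exists>!c. pr M a c \<in> G" for a using eG unfolding embedding_def by blast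
  have "desc_seq M Dd Rd ?H"
    unfolding desc_seq_def
  proof (rule conjI; intro allI impI)
    fix i
    obtain a where a: "pr M i a \<in> F" using Fu by blast
    obtain c where c: "pr M a c \<in> G" using Gu FD[OF a] by blast
    show "\<exists>!c. pr M i c \<in> ?H"
    proof (rule ex1I[of _ c])
      show "pr M i c \<in> ?H" using mem a c by blast
    next
      fix c' assume "pr M i c' \<in> ?H"
      then obtain a' where a': "pr M i a' \<in> F" "pr M a' c' \<in> G" using mem by blast
      then have "a' = a" using Fu a by blast
      then show "c' = c" using a' c Gu FD[OF a] by blast
    qed
  next
    fix i y y' assume h: "pr M i y \<in> ?H \<and> pr M (i \<oplus> O1) y' \<in> ?H"
    then obtain a a' where a: "pr M i a \<in> F" "pr M a y \<in> G" and a': "pr M (i \<oplus> O1) a' \<in> F" "pr M a' y' \<in> G"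
      using mem by blast
    have "pr M a' a \<in> RA" using dF a(1) a'(1) unfolding desc_seq_def by blast
    then have "pr M y' y \<in> Rd" using eG a(2) a'(2) unfolding embedding_def by blast
    moreover have "y \<in> Dd" "y' \<in> Dd" using eG a(2) a'(2) unfolding embedding_def by blast+
    ultimately show "y \<in> Dd \<and> y' \<in> Dd \<and> pr M y' y \<in> Rd" by blast
  qed
  then show ?thesis using sH by blast
qed

lemma main_WO: "WO M Dd Rd \<longleftrightarrow> WO M DA RA \<or> WO M DB RB"
proof
  assume w: "WO M Dd Rd"
  show "WO M DA RA \<or> WO M DB RB"
  proof (rule ccontr)
    assume "\<not> (WO M DA RA \<or> WO M DB RB)"
    then have a: "\<exists>F\<in>sets M. desc_seq M DA RA F" and b: "\<exists>F\<in>sets M. desc_seq M DB RB F"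
      using loA loB unfolding WO_def by blast+
    obtain G where "G \<in> sets M" "embedding M G DA RA Dd Rd" using main_emb[OF b] by blast
    then have "\<exists>H\<in>sets M. desc_seq M Dd Rd H" using desc_compose a by blast
    then show False using w unfolding WO_def by blast
  qed
next
  assume w: "WO M DA RA \<or> WO M DB RB"
  have "\<not> (\<exists>H\<in>sets M. desc_seq M Dd Rd H)"
  proof
    assume "\<exists>H\<in>sets M. desc_seq M Dd Rd H"
    then obtain H where "H \<in> sets M" "desc_seq M Dd Rd H" by blast
    then have "(\<exists>F\<in>sets M. desc_seq M DA RA F) \<and> (\<exists>F\<in>sets M. desc_seq M DB RB F)" by (rule main_noWO)
    then show False using w unfolding WO_def by blast
  qed
  then show "WO M Dd Rd" unfolding WO_def using LO_disj by blast
qed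

end

theorem lemma5p1:
  shows "\<exists>thD thR :: afm. \<forall>M e DA RA DB RB.
     ACA0_model M \<and> DA \<in> sets M \<and> RA \<in> sets M \<and> DB \<in> sets M \<and> RB \<in> sets M \<and>
     LO M DA RA \<and> LO M DB RB \<longrightarrow>
       (let Dd = cterm M thD e DA RA DB RB; Rd = cterm M thR e DA RA DB RB in
          LO M Dd Rd \<and>
          (WO M Dd Rd \<longleftrightarrow> WO M DA RA \<or> WO M DB RB) \<and>
          ((\<exists>F\<in>sets M. desc_seq M DB RB F) \<longrightarrow>
             (\<exists>G\<in>sets M. embedding M G DA RA Dd Rd)))"
proof (intro exI allI impI)
  fix M e DA RA DB RB
  assume h: "ACA0_model M \<and> DA \<in> sets M \<and> RA \<in> sets M \<and> DB \<in> sets M \<and> RB \<in> sets M \<and>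
     LO M DA RA \<and> LO M DB RB"
  interpret A: aca4 M DA RA DB RB
    by (rule aca4.intro, unfold_locales) (use h in auto)
  show "let Dd = cterm M thDc e DA RA DB RB; Rd = cterm M thRc e DA RA DB RB in
          LO M Dd Rd \<and>
          (WO M Dd Rd \<longleftrightarrow> WO M DA RA \<or> WO M DB RB) \<and>
          ((\<exists>F\<in>sets M. desc_seq M DB RB F) \<longrightarrow>
             (\<exists>G\<in>sets M. embedding M G DA RA Dd Rd))"
    unfolding Let_def A.cterm_D A.cterm_R
    using A.LO_disj A.main_WO A.main_emb by blast
qed


end
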